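(* $\operatorname{Proj}^+_\mathbb{R}\le_{\mathrm{W}}\operatorname{LLPO}*\lim$.
   Context: Represented spaces: a representation of a set $X$ is a partial surjection $\delta_X:\subseteq\mathbb{N}^\mathbb{N}\to X$. For a partial multi-valued function $f:\subseteq X\rightrightarrows Y$, a realizer is a partial $F:\subseteq\mathbb{N}^\mathbb{N}\to\mathbb{N}^\mathbb{N}$ with $\delta_Y(F(p))\in f(\delta_X(p))$ for all $p$ with $\delta_X(p)\in\mathrm{dom}(f)$. Weihrauch reducibility: $f\le_{\mathrm{W}} g$ iff there are computable partial $H:\subseteq\mathbb{N}^\mathbb{N}\times\mathbb{N}^\mathbb{N}\to\mathbb{N}^\mathbb{N}$ and $K:\subseteq\mathbb{N}^\mathbb{N}\to\mathbb{N}^\mathbb{N}$ such that $p\mapsto H(p,G(K(p)))$ is a realizer of $f$ for every realizer $G$ of $g$. The compositional product $g*f$ is the Weihrauch degree which is the maximum (it exists) of the degrees of $g_0\circ f_0$ over all $g_0\le_{\mathrm{W}}g$ and $f_0\le_{\mathrm{W}}f$. $\mathbb{R}$ has the Cauchy representation. $\mathcal{A}_+(\mathbb{R})$: closed subsets of $\mathbb{R}$ with positive information, a name of $A$ enumerating exactly the rational open intervals meeting $A$ (for nonempty $A$ equivalently, a sequence of reals whose closure is $A$). $\operatorname{Proj}^+_\mathbb{R}:\subseteq\mathbb{R}\times\mathcal{A}_+(\mathbb{R})\rightrightarrows\mathbb{R}$ maps $(x,A)$ with $A$ nonempty closed to the set of $y\in A$ with $|x-y|=d(x,A)$. $\operatorname{LLPO}:\subseteq\mathbb{N}^\mathbb{N}\times\mathbb{N}^\mathbb{N}\rightrightarrows\{0,1\}$: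 its domain consists of pairs $(p_0,p_1)$ such that there is at most one pair $(j,m)$ with $p_j(m)\ne0$, and $i\in\operatorname{LLPO}(p_0,p_1)$ iff $p_i=0^\mathbb{N}$. $\lim:\subseteq(\mathbb{N}^\mathbb{N})^\mathbb{N}\to\mathbb{N}^\mathbb{N}$ maps a convergent sequence in Baire space to its limit. *)

theory Defs
  imports "HOL-Analysis.Analysis" "HOL-Library.Nat_Bijection"
begin

section \<open>Partial recursive functions (Kleene style, no arity checks)\<close>

datatype recf = Zf | Sf | Pf nat | Cf recf "recf list" | Rf recf recf | Mf recf

inductive reval :: "recf \<Rightarrow> nat list \<Rightarrow> nat \<Rightarrow> bool" where
  reval_Z: "reval Zf xs 0"
| reval_S: "reval Sf (x # xs) (Suc x)"
| reval_P: "i < length xs \<Longrightarrow> reval (Pf i) xs (xs ! i)"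
| reval_C: "length ys = length gs \<Longrightarrow> (\<forall>i<length gs. reval (gs ! i) xs (ys ! i))
             \<Longrightarrow> reval f ys z \<Longrightarrow> reval (Cf f gs) xs z"
| reval_R0: "reval f xs y \<Longrightarrow> reval (Rf f g) (0 # xs) y"
| reval_RS: "reval (Rf f g) (n # xs) y \<Longrightarrow> reval g (y # n # xs) z
             \<Longrightarrow> reval (Rf f g) (Suc n # xs) z"
| reval_M: "reval f (n # xs) 0 \<Longrightarrow> (\<forall>m<n. \<exists>y. reval f (m # xs) (Suc y))
             \<Longrightarrow> reval (Mf f) xs n"

definition computable_nat :: "(nat \<Rightarrow> nat) \<Rightarrow> bool" where
  "computable_nat h \<longleftrightarrow> (\<exists>c. \<forall>n. reval c [n] (h n))"

type_synonym baire = "nat \<Rightarrow> nat"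

text \<open>The partial function on Baire space given by an associate h: the n-th output
  digit is h(<n, p[0..k)>) - 1 for the least k with a nonzero value; the function is
  defined at p iff such k exists for every n.  A partial function on Baire space is
  computable iff it is (a restriction of) some tt_apply h with h computable.\<close>
definition tt_apply :: "(nat \<Rightarrow> nat) \<Rightarrow> baire \<Rightarrow> baire option" where
  "tt_apply h p =
     (if \<forall>n. \<exists>k. h (prod_encode (n, list_encode (map p [0..<k]))) \<noteq> 0
      then Some (\<lambda>n. h (prod_encode (n, list_encode (map p
                 [0..<(LEAST k. h (prod_encode (n, list_encode (map p [0..<k]))) \<noteq> 0)]))) - 1)
      else None)"

definition bpair :: "baire \<Rightarrow> baire \<Rightarrow> baire" where
  "bpair p q = (\<lambda>n. if even n then p (n div 2) else q (n div 2))"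

text \<open>A representation of a set of elements of type 'a is a partial map from Baire space;
  a partial multi-valued problem f is a map to sets of values, its domain being the set of
  points with nonempty value set.\<close>

definition realizes ::
  "(baire \<Rightarrow> 'a option) \<Rightarrow> (baire \<Rightarrow> 'b option) \<Rightarrow> ('a \<Rightarrow> 'b set) \<Rightarrow> (baire \<Rightarrow> baire) \<Rightarrow> bool" where
  "realizes \<delta>X \<delta>Y f F \<longleftrightarrow>
     (\<forall>p x. \<delta>X p = Some x \<longrightarrow> f x \<noteq> {} \<longrightarrow> (\<exists>y. \<delta>Y (F p) = Some y \<and> y \<in> f x))"

definition weihrauch_le ::
  "(baire \<Rightarrow> 'a option) \<Rightarrow> (baire \<Rightarrow> 'b option) \<Rightarrow> ('a \<Rightarrow> 'b set) \<Rightarrow>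
   (baire \<Rightarrow> 'c option) \<Rightarrow> (baire \<Rightarrow> 'd option) \<Rightarrow> ('c \<Rightarrow> 'd set) \<Rightarrow> bool" where
  "weihrauch_le \<delta>X \<delta>Y f \<delta>U \<delta>V g \<longleftrightarrow>
     (\<exists>hK hH. computable_nat hK \<and> computable_nat hH \<and>
        (\<forall>G. realizes \<delta>U \<delta>V g G \<longrightarrow>
           (\<forall>p x. \<delta>X p = Some x \<longrightarrow> f x \<noteq> {} \<longrightarrow>
              (\<exists>q r. tt_apply hK p = Some q \<and> tt_apply hH (bpair p (G q)) = Some r \<and>
                     (\<exists>y. \<delta>Y r = Some y \<and> y \<in> f x)))))"

definition mv_comp :: "('b \<Rightarrow> 'c set) \<Rightarrow> ('a \<Rightarrow> 'b set) \<Rightarrow> 'a \<Rightarrow> 'c set" where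
  "mv_comp g f x = (if f x \<noteq> {} \<and> (\<forall>y\<in>f x. g y \<noteq> {}) then (\<Union>y\<in>f x. g y) else {})"

text \<open>f \<le>_W g * h.  Since g * h is the maximum of the degrees of g0 \<circ> h0 with g0 \<le>_W g,
  h0 \<le>_W h, this holds iff f \<le>_W g0 \<circ> h0 for some such g0, h0; and every problem is
  Weihrauch equivalent to one on Baire space with identity representations (its realizer
  version), which is compatible with composition, so g0, h0 range over those.\<close>
definition weihrauch_le_cprod ::
  "(baire \<Rightarrow> 'a option) \<Rightarrow> (baire \<Rightarrow> 'b option) \<Rightarrow> ('a \<Rightarrow> 'b set) \<Rightarrow>
   (baire \<Rightarrow> 'c option) \<Rightarrow> (baire \<Rightarrow> 'd option) \<Rightarrow> ('c \<Rightarrow> 'd set) \<Rightarrow>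
   (baire \<Rightarrow> 'e option) \<Rightarrow> (baire \<Rightarrow> 'f option) \<Rightarrow> ('e \<Rightarrow> 'f set) \<Rightarrow> bool" where
  "weihrauch_le_cprod \<delta>X \<delta>Y f \<delta>U \<delta>V g \<delta>W \<delta>Z h \<longleftrightarrow>
     (\<exists>(g0 :: baire \<Rightarrow> baire set) (h0 :: baire \<Rightarrow> baire set).
        weihrauch_le Some Some g0 \<delta>U \<delta>V g \<and>
        weihrauch_le Some Some h0 \<delta>W \<delta>Z h \<and>
        weihrauch_le \<delta>X \<delta>Y f Some Some (mv_comp g0 h0))"

definition rep_prod :: "(baire \<Rightarrow> 'a option) \<Rightarrow> (baire \<Rightarrow> 'b option) \<Rightarrow> baire \<Rightarrow> ('a \<times> 'b) option" where
  "rep_prod \<delta>1 \<delta>2 r =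
     (case (\<delta>1 (\<lambda>n. r (2 * n)), \<delta>2 (\<lambda>n. r (2 * n + 1))) of
        (Some a, Some b) \<Rightarrow> Some (a, b)
      | _ \<Rightarrow> None)"

definition nat_rep :: "baire \<Rightarrow> nat option" where
  "nat_rep p = Some (p 0)"

definition seq_rep :: "baire \<Rightarrow> (nat \<Rightarrow> baire) option" where
  "seq_rep r = Some (\<lambda>i j. r (prod_encode (i, j)))"

definition real_of_code :: "nat \<Rightarrow> real" where
  "real_of_code n = (case prod_decode n of (a, b) \<Rightarrow> of_int (int_decode a) / real (b + 1))"

definition cauchy_rep :: "baire \<Rightarrow> real option" where
  "cauchy_rep p =
     (if \<exists>x. \<forall>n. \<bar>real_of_code (p n) - x\<bar> \<le> (1/2) ^ n
      then Some (THE x. \<forall>n. \<bar>real_of_code (p n) - x\<bar> \<le> (1/2) ^ n) else None)"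

definition ivl_of_code :: "nat \<Rightarrow> real \<times> real" where
  "ivl_of_code k = (real_of_code (fst (prod_decode k)), real_of_code (snd (prod_decode k)))"

text \<open>Positive information: p enumerates (entries n+1 encode interval n, 0 = no output)
  exactly the rational open intervals meeting A.\<close>
definition names_closed_pos :: "baire \<Rightarrow> real set \<Rightarrow> bool" where
  "names_closed_pos p A \<longleftrightarrow>
     {ivl_of_code k | k. Suc k \<in> range p} =
     {(a, b). a \<in> \<rat> \<and> b \<in> \<rat> \<and> a < b \<and> (\<exists>y\<in>A. a < y \<and> y < b)}"

definition closed_pos_rep :: "baire \<Rightarrow> real set option" where
  "closed_pos_rep p =
     (if \<exists>A. closed A \<and> names_closed_pos p A
      then Some (THE A. closed A \<and> names_closed_pos p A) else None)"

definition proj_plus :: "real \<times> real set \<Rightarrow> real set" where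
  "proj_plus xA = (case xA of (x, A) \<Rightarrow>
     (if closed A \<and> A \<noteq> {} then {y \<in> A. \<bar>x - y\<bar> = infdist x A} else {}))"

definition llpo :: "baire \<times> baire \<Rightarrow> nat set" where
  "llpo pp = (case pp of (p0, p1) \<Rightarrow>
     (if \<forall>j m j' m'. j < 2 \<and> j' < 2 \<and> ([p0, p1] ! j) m \<noteq> 0 \<and> ([p0, p1] ! j') m' \<noteq> 0
                      \<longrightarrow> j = j' \<and> m = m'
      then {i. i < 2 \<and> [p0, p1] ! i = (\<lambda>_. 0)} else {}))"

definition baire_lim :: "(nat \<Rightarrow> baire) \<Rightarrow> baire set" where
  "baire_lim s = {p. \<forall>k. \<exists>N. \<forall>i\<ge>N. \<forall>n<k. s i n = p n}"

end

theory Submission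
  imports Defs
begin

section \<open>A small expression language compiled to recf\<close>

primrec pr :: "(nat \<Rightarrow> nat \<Rightarrow> nat) \<Rightarrow> nat \<Rightarrow> nat \<Rightarrow> nat" where
  "pr g z 0 = z"
| "pr g z (Suc i) = g (pr g z i) i"

definition recfn :: "nat \<Rightarrow> (nat list \<Rightarrow> nat) \<Rightarrow> bool" where
  "recfn k f \<longleftrightarrow> (\<exists>c. \<forall>xs. length xs = k \<longrightarrow> reval c xs (f xs))"

datatype ex = V nat | K nat | Sc ex | Fn "nat list \<Rightarrow> nat" "ex list" | PR ex ex ex

primrec ev :: "ex \<Rightarrow> nat list \<Rightarrow> nat" where
  "ev (V i) env = env ! i"
| "ev (K n) env = n"
| "ev (Sc e) env = Suc (ev e env)"
| "ev (Fn f es) env = f (map (\<lambda>e. ev e env) es)"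
| "ev (PR b s n) env = pr (\<lambda>acc i. ev s (acc # i # env)) (ev b env) (ev n env)"

primrec wfe :: "nat \<Rightarrow> ex \<Rightarrow> bool" where
  "wfe m (V i) = (i < m)"
| "wfe m (K n) = True"
| "wfe m (Sc e) = wfe m e"
| "wfe m (Fn f es) = (recfn (length es) f \<and> list_all (wfe m) es)"
| "wfe m (PR b s n) = (wfe m b \<and> wfe (Suc (Suc m)) s \<and> wfe m n)"

primrec kc :: "nat \<Rightarrow> recf" where
  "kc 0 = Zf"
| "kc (Suc n) = Cf Sf [kc n]"

primrec cmp :: "nat \<Rightarrow> ex \<Rightarrow> recf" where
  "cmp m (V i) = Pf i"
| "cmp m (K n) = kc n"
| "cmp m (Sc e) = Cf Sf [cmp m e]"
| "cmp m (Fn f es) = Cf (SOME c. \<forall>xs. length xs = length es \<longrightarrow> reval c xs (f xs)) (map (cmp m) es)"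
| "cmp m (PR b s n) = Cf (Rf (cmp m b) (cmp (Suc (Suc m)) s)) (cmp m n # map Pf [0..<m])"

lemma reval_kc: "reval (kc n) xs n"
proof (induction n)
  case 0 then show ?case by (simp add: reval_Z)
next
  case (Suc n)
  show ?case
    unfolding kc.simps by (rule reval_C[where ys="[n]"]) (use Suc in \<open>auto intro: reval_S\<close>)
qed

lemma reval_Rf:
  assumes "reval f xs z" "\<And>acc i. reval g (acc # i # xs) (G acc i)"
  shows "reval (Rf f g) (n # xs) (pr G z n)"
proof (induction n)
  case 0 then show ?case using assms by (simp add: reval_R0)
next
  case (Suc n) then show ?case using assms by (simp add: reval_RS)
qed

lemma cmp_correct:
  "wfe m e \<Longrightarrow> length env = m \<Longrightarrow> reval (cmp m e) env (ev e env)"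
proof (induction e arbitrary: m env)
  case (V i) then show ?case by (simp add: reval_P)
next
  case (K n) then show ?case by (simp add: reval_kc)
next
  case (Sc e)
  show ?case
    unfolding cmp.simps ev.simps by (rule reval_C[where ys="[ev e env]"]) (use Sc in \<open>auto intro: reval_S\<close>)
next
  case (Fn f es)
  have r: "recfn (length es) f" using Fn.prems by simp
  let ?c = "SOME c. \<forall>xs. length xs = length es \<longrightarrow> reval c xs (f xs)"
  have c: "\<forall>xs. length xs = length es \<longrightarrow> reval ?c xs (f xs)"
    using r unfolding recfn_def by (rule someI_ex)
  show ?case
  proof (simp, rule reval_C[where ys="map (\<lambda>e. ev e env) es"])
    show "length (map (\<lambda>e. ev e env) es) = length (map (cmp m) es)" by simp
    show "\<forall>i<length (map (cmp m) es). reval (map (cmp m) es ! i) env (map (\<lambda>e. ev e env) es ! i)"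
    proof (intro allI impI)
      fix i assume i: "i < length (map (cmp m) es)"
      then have "es ! i \<in> set es" by simp
      moreover have "wfe m (es ! i)" using Fn.prems i by (simp add: list_all_length)
      ultimately show "reval (map (cmp m) es ! i) env (map (\<lambda>e. ev e env) es ! i)"
        using Fn.IH Fn.prems i by simp
    qed
    show "reval ?c (map (\<lambda>e. ev e env) es) (f (map (\<lambda>e. ev e env) es))"
      using c by simp
  qed
next
  case (PR b s n)
  have hb: "reval (cmp m b) env (ev b env)" using PR by simp
  have hs: "\<And>acc i. reval (cmp (Suc (Suc m)) s) (acc # i # env) (ev s (acc # i # env))"
    using PR by simp
  have hn: "reval (cmp m n) env (ev n env)" using PR by simp
  show ?case
  proof (simp, rule reval_C[where ys="ev n env # env"])
    show "length (ev n env # env) = length (cmp m n # map Pf [0..<m])" using PR by simp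
    show "\<forall>i<length (cmp m n # map Pf [0..<m]).
       reval ((cmp m n # map Pf [0..<m]) ! i) env ((ev n env # env) ! i)"
    proof (intro allI impI)
      fix i assume i: "i < length (cmp m n # map Pf [0..<m])"
      show "reval ((cmp m n # map Pf [0..<m]) ! i) env ((ev n env # env) ! i)"
      proof (cases i)
        case 0 then show ?thesis using hn by simp
      next
        case (Suc j) then show ?thesis using i PR.prems by (simp add: reval_P)
      qed
    qed
    show "reval (Rf (cmp m b) (cmp (Suc (Suc m)) s)) (ev n env # env)
      (pr (\<lambda>acc i. ev s (acc # i # env)) (ev b env) (ev n env))"
      by (rule reval_Rf[OF hb hs])
  qed
qed

lemma recfn_ex:
  assumes "wfe k e" "\<And>xs. length xs = k \<Longrightarrow> ev e xs = f xs"
  shows "recfn k f"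
  unfolding recfn_def using cmp_correct[OF assms(1)] assms(2) by metis

definition rec1 :: "(nat \<Rightarrow> nat) \<Rightarrow> bool" where
  "rec1 f \<longleftrightarrow> recfn 1 (\<lambda>xs. f (xs ! 0))"
definition rec2 :: "(nat \<Rightarrow> nat \<Rightarrow> nat) \<Rightarrow> bool" where
  "rec2 f \<longleftrightarrow> recfn 2 (\<lambda>xs. f (xs ! 0) (xs ! 1))"
definition rec3 :: "(nat \<Rightarrow> nat \<Rightarrow> nat \<Rightarrow> nat) \<Rightarrow> bool" where
  "rec3 f \<longleftrightarrow> recfn 3 (\<lambda>xs. f (xs ! 0) (xs ! 1) (xs ! 2))"
definition rec4 :: "(nat \<Rightarrow> nat \<Rightarrow> nat \<Rightarrow> nat \<Rightarrow> nat) \<Rightarrow> bool" where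
  "rec4 f \<longleftrightarrow> recfn 4 (\<lambda>xs. f (xs ! 0) (xs ! 1) (xs ! 2) (xs ! 3))"

definition A1 :: "(nat \<Rightarrow> nat) \<Rightarrow> ex \<Rightarrow> ex" where
  "A1 f a = Fn (\<lambda>xs. f (xs ! 0)) [a]"
definition A2 :: "(nat \<Rightarrow> nat \<Rightarrow> nat) \<Rightarrow> ex \<Rightarrow> ex \<Rightarrow> ex" where
  "A2 f a b = Fn (\<lambda>xs. f (xs ! 0) (xs ! 1)) [a, b]"
definition A3 :: "(nat \<Rightarrow> nat \<Rightarrow> nat \<Rightarrow> nat) \<Rightarrow> ex \<Rightarrow> ex \<Rightarrow> ex \<Rightarrow> ex" where
  "A3 f a b c = Fn (\<lambda>xs. f (xs ! 0) (xs ! 1) (xs ! 2)) [a, b, c]"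
definition A4 :: "(nat \<Rightarrow> nat \<Rightarrow> nat \<Rightarrow> nat \<Rightarrow> nat) \<Rightarrow> ex \<Rightarrow> ex \<Rightarrow> ex \<Rightarrow> ex \<Rightarrow> ex" where
  "A4 f a b c d = Fn (\<lambda>xs. f (xs ! 0) (xs ! 1) (xs ! 2) (xs ! 3)) [a, b, c, d]"

lemma ev_A [simp]:
  "ev (A1 f a) env = f (ev a env)"
  "ev (A2 g a b) env = g (ev a env) (ev b env)"
  "ev (A3 h a b c) env = h (ev a env) (ev b env) (ev c env)"
  "ev (A4 k a b c d) env = k (ev a env) (ev b env) (ev c env) (ev d env)"
  by (simp_all add: A1_def A2_def A3_def A4_def)

lemma wfe_A [simp]:
  "wfe m (A1 f a) = (rec1 f \<and> wfe m a)"
  "wfe m (A2 g a b) = (rec2 g \<and> wfe m a \<and> wfe m b)"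
  "wfe m (A3 h a b c) = (rec3 h \<and> wfe m a \<and> wfe m b \<and> wfe m c)"
  "wfe m (A4 k a b c d) = (rec4 k \<and> wfe m a \<and> wfe m b \<and> wfe m c \<and> wfe m d)"
  by (simp_all add: A1_def A2_def A3_def A4_def rec1_def rec2_def rec3_def rec4_def eval_nat_numeral)

lemma rec1I: "wfe 1 e \<Longrightarrow> (\<And>x. ev e [x] = f x) \<Longrightarrow> rec1 f"
  unfolding rec1_def
  by (rule recfn_ex) (auto simp: length_Suc_conv)
lemma rec2I: "wfe 2 e \<Longrightarrow> (\<And>x y. ev e [x, y] = f x y) \<Longrightarrow> rec2 f"
  unfolding rec2_def
  by (rule recfn_ex) (auto simp: length_Suc_conv numeral_2_eq_2)
lemma rec3I: "wfe 3 e \<Longrightarrow> (\<And>x y z. ev e [x, y, z] = f x y z) \<Longrightarrow> rec3 f"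
  unfolding rec3_def
  by (rule recfn_ex) (auto simp: length_Suc_conv numeral_3_eq_3)
lemma rec4I: "wfe 4 e \<Longrightarrow> (\<And>x y z w. ev e [x, y, z, w] = f x y z w) \<Longrightarrow> rec4 f"
  unfolding rec4_def
  by (rule recfn_ex) (auto simp: length_Suc_conv eval_nat_numeral)

lemma computable_nat_rec1: "rec1 h \<Longrightarrow> computable_nat h"
  unfolding rec1_def recfn_def computable_nat_def by (metis length_Cons list.size(3) nth_Cons_0 One_nat_def)

lemma pr_add: "pr (\<lambda>acc i. Suc acc) y n = n + y" by (induction n) auto
lemma pr_mult: "pr (\<lambda>acc i. acc + y) 0 n = n * y" by (induction n) auto
lemma pr_pred: "pr (\<lambda>acc i. i) 0 n = n - Suc 0" by (induction n) auto
lemma pr_sub: "pr (\<lambda>acc i. acc - Suc 0) x n = x - n" by (induction n) auto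

lemma rec2_add: "rec2 (+)"
  by (rule rec2I[where e="PR (V 1) (Sc (V 0)) (V 0)"]) (simp_all add: pr_add)
lemma rec2_mult: "rec2 (*)"
  by (rule rec2I[where e="PR (K 0) (A2 (+) (V 0) (V 3)) (V 0)"]) (simp_all add: rec2_add pr_mult)
lemma rec1_pred: "rec1 (\<lambda>x. x - Suc 0)"
  by (rule rec1I[where e="PR (K 0) (V 1) (V 0)"]) (simp_all add: pr_pred)
lemma rec2_sub: "rec2 (-)"
  by (rule rec2I[where e="PR (V 0) (A1 (\<lambda>x. x - Suc 0) (V 0)) (V 1)"]) (simp_all add: rec1_pred pr_sub)

definition cond :: "nat \<Rightarrow> nat \<Rightarrow> nat \<Rightarrow> nat" where
  "cond c a b = (if c \<noteq> 0 then a else b)"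

lemma rec3_cond: "rec3 cond"
proof (rule rec3I[where e="A2 (+) (A2 (*) (V 1) (A2 (-) (K 1) (A2 (-) (K 1) (V 0))))
                              (A2 (*) (V 2) (A2 (-) (K 1) (V 0)))"])
  show "wfe 3 (A2 (+) (A2 (*) (V 1) (A2 (-) (K 1) (A2 (-) (K 1) (V 0))))
                              (A2 (*) (V 2) (A2 (-) (K 1) (V 0))))"
    by (simp add: rec2_add rec2_mult rec2_sub)
  fix x y z show "ev (A2 (+) (A2 (*) (V 1) (A2 (-) (K 1) (A2 (-) (K 1) (V 0))))
                              (A2 (*) (V 2) (A2 (-) (K 1) (V 0)))) [x, y, z] = cond x y z"
    by (cases x) (simp_all add: cond_def)
qed

lemma cond_simp [simp]: "cond (of_bool P) a b = (if P then a else b)"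
  by (simp add: cond_def)

definition nle :: "nat \<Rightarrow> nat \<Rightarrow> nat" where "nle x y = of_bool (x \<le> y)"
definition nlt :: "nat \<Rightarrow> nat \<Rightarrow> nat" where "nlt x y = of_bool (x < y)"
definition neq :: "nat \<Rightarrow> nat \<Rightarrow> nat" where "neq x y = of_bool (x = y)"
definition nand :: "nat \<Rightarrow> nat \<Rightarrow> nat" where "nand x y = of_bool (x \<noteq> 0 \<and> y \<noteq> 0)"
definition nnot :: "nat \<Rightarrow> nat" where "nnot x = of_bool (x = 0)"

lemma rec2_nle: "rec2 nle"
  by (rule rec2I[where e="A2 (-) (K 1) (A2 (-) (V 0) (V 1))"]) (auto simp: rec2_sub nle_def)
lemma rec2_nlt: "rec2 nlt"
  by (rule rec2I[where e="A2 nle (Sc (V 0)) (V 1)"]) (auto simp: rec2_nle nle_def nlt_def)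
lemma rec2_neq: "rec2 neq"
  by (rule rec2I[where e="A2 (*) (A2 nle (V 0) (V 1)) (A2 nle (V 1) (V 0))"])
     (auto simp: rec2_nle rec2_mult nle_def neq_def)
lemma rec2_nand: "rec2 nand"
  by (rule rec2I[where e="A3 cond (V 0) (A3 cond (V 1) (K 1) (K 0)) (K 0)"])
     (auto simp: rec3_cond nand_def cond_def)
lemma rec1_nnot: "rec1 nnot"
  by (rule rec1I[where e="A3 cond (V 0) (K 0) (K 1)"]) (auto simp: rec3_cond nnot_def cond_def)

lemmas rec_basic = rec2_add rec2_mult rec2_sub rec3_cond rec2_nle rec2_nlt rec2_neq rec2_nand rec1_nnot

lemma nb_simps [simp]:
  "nle x y \<noteq> 0 \<longleftrightarrow> x \<le> y" "nlt x y \<noteq> 0 \<longleftrightarrow> x < y" "neq x y \<noteq> 0 \<longleftrightarrow> x = y"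
  "nand a b \<noteq> 0 \<longleftrightarrow> a \<noteq> 0 \<and> b \<noteq> 0" "nnot a \<noteq> 0 \<longleftrightarrow> a = 0"
  by (auto simp: nle_def nlt_def neq_def nand_def nnot_def)

lemmas ndefs = cond_def nle_def nlt_def neq_def nand_def nnot_def

definition bs :: "(nat \<Rightarrow> bool) \<Rightarrow> nat \<Rightarrow> nat" where
  "bs P n = pr (\<lambda>r i. if r < i then r else if P i then i else Suc i) 0 n"

lemma bs_eq: "bs P n = (if \<exists>i<n. P i then LEAST i. P i else n)"
proof (induction n)
  case 0 then show ?case by (simp add: bs_def)
next
  case (Suc n)
  have e: "bs P (Suc n) = (if bs P n < n then bs P n else if P n then n else Suc n)"
    by (simp add: bs_def)
  show ?case
  proof (cases "\<exists>i<n. P i")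
    case True
    then obtain i where i: "i < n" "P i" by blast
    then have L: "(LEAST i. P i) < n" using Least_le[of P i] by simp
    have "bs P n = (LEAST i. P i)" using Suc.IH True by simp
    then have "bs P (Suc n) = (LEAST i. P i)" using e L by simp
    moreover have "\<exists>i<Suc n. P i" using i less_SucI by blast
    ultimately show ?thesis by simp
  next
    case False
    have bn: "bs P n = n" using Suc.IH False by (simp only: if_not_P[OF False] if_False)
    show ?thesis
    proof (cases "P n")
      case True
      then have "(LEAST i. P i) = n" using False by (intro Least_equality) (auto simp: not_less[symmetric])
      then show ?thesis using True e bn by auto
    next
      case f2: False
      then show ?thesis using False e bn by (auto simp: less_Suc_eq)
    qed
  qed
qed

lemma bs_found: "P i \<Longrightarrow> i < n \<Longrightarrow> bs P n = (LEAST i. P i)"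
  by (auto simp: bs_eq)

lemma pr_tri: "pr (\<lambda>acc i. Suc (acc + i)) 0 n = triangle n"
  by (induction n) auto

lemma rec1_triangle: "rec1 triangle"
  by (rule rec1I[where e="PR (K 0) (A2 (+) (V 0) (Sc (V 1))) (V 0)"]) (simp_all add: rec_basic pr_tri)

definition psq :: "nat \<Rightarrow> nat" where
  "psq x = bs (\<lambda>s. x < triangle (Suc s)) (Suc x)"
definition pd1 :: "nat \<Rightarrow> nat" where "pd1 x = x - triangle (psq x)"
definition pd2 :: "nat \<Rightarrow> nat" where "pd2 x = psq x - pd1 x"

lemma tri_ge: "n \<le> triangle n"
  by (induction n) auto

lemma prod_decode_pd: "prod_decode x = (pd1 x, pd2 x)"
proof -
  let ?P = "\<lambda>s. x < triangle (Suc s)"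
  have px: "?P x" using tri_ge[of "Suc x"] by simp
  have s: "psq x = (LEAST s. ?P s)" unfolding psq_def by (rule bs_found[where P="?P", OF px]) simp
  have ps: "?P (psq x)" unfolding s by (rule LeastI[where P="?P", OF px])
  have le: "triangle (psq x) \<le> x"
  proof (cases "psq x")
    case 0 then show ?thesis by simp
  next
    case (Suc s')
    then have "s' < (LEAST s. ?P s)" using s by simp
    then have "\<not> ?P s'" by (rule not_less_Least)
    then show ?thesis using Suc by simp
  qed
  have m: "pd1 x \<le> psq x" using ps le unfolding pd1_def by simp
  have "prod_encode (pd1 x, pd2 x) = x"
    unfolding prod_encode_def pd2_def using m le by (simp add: pd1_def)
  then show ?thesis by (metis prod_encode_inverse)
qed

lemma pd_simps [simp]: "pd1 (prod_encode (a, b)) = a" "pd2 (prod_encode (a, b)) = b"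
  using prod_decode_pd[of "prod_encode (a, b)"] by simp_all

lemma penc_pd [simp]: "prod_encode (pd1 x, pd2 x) = x"
  by (metis prod_decode_pd prod_decode_inverse)

lemma pd_le: "pd1 x \<le> x" "pd2 x \<le> x"
  using le_prod_encode_1[where a="pd1 x" and b="pd2 x"] le_prod_encode_2[where a="pd1 x" and b="pd2 x"]
  by simp_all

lemma rec1_psq: "rec1 psq"
  by (rule rec1I[where e="PR (K 0) (A3 cond (A2 nlt (V 0) (V 1)) (V 0)
          (A3 cond (A2 nlt (V 2) (A1 triangle (Sc (V 1)))) (V 1) (Sc (V 1)))) (Sc (V 0))"])
     (simp_all add: rec_basic rec1_triangle psq_def bs_def ndefs)

lemma rec1_pd1: "rec1 pd1"
  by (rule rec1I[where e="A2 (-) (V 0) (A1 triangle (A1 psq (V 0)))"])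
     (simp_all add: rec_basic rec1_triangle rec1_psq pd1_def)
lemma rec1_pd2: "rec1 pd2"
  by (rule rec1I[where e="A2 (-) (A1 psq (V 0)) (A1 pd1 (V 0))"])
     (simp_all add: rec_basic rec1_pd1 rec1_psq pd2_def)

definition penc :: "nat \<Rightarrow> nat \<Rightarrow> nat" where "penc a b = prod_encode (a, b)"

lemma rec2_penc: "rec2 penc"
  by (rule rec2I[where e="A2 (+) (A1 triangle (A2 (+) (V 0) (V 1))) (V 0)"])
     (simp_all add: rec_basic rec1_triangle penc_def prod_encode_def)

lemma penc_simps [simp]: "pd1 (penc a b) = a" "pd2 (penc a b) = b"
  by (simp_all add: penc_def)

lemma penc_inj [simp]: "penc a b = penc c d \<longleftrightarrow> a = c \<and> b = d"
  by (simp add: penc_def)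

lemma penc_00 [simp]: "penc 0 0 = 0" by (simp add: penc_def prod_encode_def)

lemma pd_0 [simp]: "pd1 0 = 0" "pd2 0 = 0"
  using penc_simps[of 0 0] by simp_all

definition ltl :: "nat \<Rightarrow> nat" where "ltl c = pd2 (c - 1)"
definition ltlp :: "nat \<Rightarrow> nat \<Rightarrow> nat" where "ltlp c i = pr (\<lambda>acc j. ltl acc) c i"
definition lnth :: "nat \<Rightarrow> nat \<Rightarrow> nat" where "lnth c i = pd1 (ltlp c i - 1)"
definition lge :: "nat \<Rightarrow> nat \<Rightarrow> bool" where "lge c k = (k = 0 \<or> ltlp c (k - 1) \<noteq> 0)"

lemma ltlp_enc: "ltlp (list_encode xs) i = list_encode (drop i xs)"
proof (induction i)
  case 0 then show ?case by (simp add: ltlp_def)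
next
  case (Suc i)
  have "ltlp (list_encode xs) (Suc i) = ltl (list_encode (drop i xs))"
    using Suc by (simp add: ltlp_def)
  also have "\<dots> = list_encode (drop (Suc i) xs)"
    by (cases "drop i xs") (auto simp: ltl_def prod_decode_pd[symmetric] drop_Suc tl_drop[symmetric] drop_eq_Nil2
        dest!: arg_cong[where f=tl])
  finally show ?case .
qed

lemma lnth_enc: "i < length xs \<Longrightarrow> lnth (list_encode xs) i = xs ! i"
  by (simp add: lnth_def ltlp_enc Cons_nth_drop_Suc[symmetric] penc_def[symmetric])

lemma list_encode_0: "list_encode ys = 0 \<longleftrightarrow> ys = []"
  by (cases ys) auto

lemma lge_enc: "lge (list_encode xs) k \<longleftrightarrow> k \<le> length xs"
  by (auto simp: lge_def ltlp_enc list_encode_0)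

lemma rec1_ltl: "rec1 ltl"
  by (rule rec1I[where e="A1 pd2 (A2 (-) (V 0) (K 1))"]) (simp_all add: rec_basic rec1_pd2 ltl_def)
lemma rec2_ltlp: "rec2 ltlp"
  by (rule rec2I[where e="PR (V 0) (A1 ltl (V 0)) (V 1)"]) (simp_all add: rec1_ltl ltlp_def)
lemma rec2_lnth: "rec2 lnth"
  by (rule rec2I[where e="A1 pd1 (A2 (-) (A2 ltlp (V 0) (V 1)) (K 1))"])
     (simp_all add: rec_basic rec1_pd1 rec2_ltlp lnth_def)
lemma rec2_lge: "rec2 (\<lambda>c k. of_bool (lge c k))"
  by (rule rec2I[where e="A3 cond (A2 neq (V 1) (K 0)) (K 1)
             (A3 cond (A2 ltlp (V 0) (A2 (-) (V 1) (K 1))) (K 1) (K 0))"])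
     (auto simp: rec_basic rec2_ltlp lge_def ndefs)

lemma tt_apply_std:
  assumes h: "\<And>n c. h (prod_encode (n, c)) = (if lge c (need n) then Suc (\<Phi> n c) else 0)"
  shows "tt_apply h p = Some (\<lambda>n. \<Phi> n (list_encode (map p [0..<need n])))"
proof -
  have hh: "h (prod_encode (n, list_encode (map p [0..<k]))) = (if need n \<le> k then Suc (\<Phi> n (list_encode (map p [0..<k]))) else 0)"
    for n k by (simp add: h lge_enc)
  have L: "(LEAST k. h (prod_encode (n, list_encode (map p [0..<k]))) \<noteq> 0) = need n" for n
    by (rule Least_equality) (auto simp: hh split: if_splits)
  have ex: "\<forall>n. \<exists>k. h (prod_encode (n, list_encode (map p [0..<k]))) \<noteq> 0"
  proof
    fix n show "\<exists>k. h (prod_encode (n, list_encode (map p [0..<k]))) \<noteq> 0"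
      by (rule exI[where x="need n"]) (simp add: hh)
  qed
  have "tt_apply h p = Some (\<lambda>n. h (prod_encode (n, list_encode (map p [0..<need n]))) - 1)"
    unfolding tt_apply_def L by (simp only: ex if_True all_simps simp_thms)
  then show ?thesis by (simp add: hh)
qed

definition assoc :: "(nat \<Rightarrow> nat) \<Rightarrow> (nat \<Rightarrow> nat \<Rightarrow> nat) \<Rightarrow> nat \<Rightarrow> nat" where
  "assoc need \<Phi> x = (if lge (pd2 x) (need (pd1 x)) then Suc (\<Phi> (pd1 x) (pd2 x)) else 0)"

lemma tt_apply_assoc:
  "tt_apply (assoc need \<Phi>) p = Some (\<lambda>n. \<Phi> n (list_encode (map p [0..<need n])))"
  by (rule tt_apply_std) (simp add: assoc_def penc_def[symmetric])

lemma rec_assoc: "rec1 need \<Longrightarrow> rec2 \<Phi> \<Longrightarrow> computable_nat (assoc need \<Phi>)"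
  apply (rule computable_nat_rec1)
  apply (rule rec1I[where e="A3 cond (A2 (\<lambda>c k. of_bool (lge c k)) (A1 pd2 (V 0)) (A1 need (A1 pd1 (V 0))))
       (Sc (A2 \<Phi> (A1 pd1 (V 0)) (A1 pd2 (V 0)))) (K 0)"])
   apply (simp_all add: rec_basic rec2_lge rec1_pd1 rec1_pd2 assoc_def)
  done

lemma lnth_map: "i < N \<Longrightarrow> lnth (list_encode (map p [0..<N])) i = p i"
  by (simp add: lnth_enc)

definition ndiv :: "nat \<Rightarrow> nat \<Rightarrow> nat" where
  "ndiv x y = bs (\<lambda>q. x < Suc q * y) (Suc x)"

lemma ndiv_eq: "0 < y \<Longrightarrow> ndiv x y = x div y"
proof -
  assume y: "0 < y"
  have p: "x < Suc (x div y) * y"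
    using y by (metis add.commute div_mult_mod_eq mod_less_divisor mult_Suc add_less_mono1 nat_add_left_cancel_less)
  have "x div y \<le> x" by simp
  then have b: "x div y < Suc x" by (rule le_imp_less_Suc)
  have "(LEAST q. x < Suc q * y) = x div y"
  proof (rule Least_equality)
    show "x < Suc (x div y) * y" by (rule p)
    fix q assume "x < Suc q * y"
    then show "x div y \<le> q"
      by (metis less_Suc_eq_le less_mult_imp_div_less)
  qed
  then show ?thesis unfolding ndiv_def using bs_found[where P="\<lambda>q. x < Suc q * y", OF p b] by simp
qed

lemma rec2_ndiv: "rec2 ndiv"
  by (rule rec2I[where e="PR (K 0) (A3 cond (A2 nlt (V 0) (V 1)) (V 0)
          (A3 cond (A2 nlt (V 2) (A2 (*) (Sc (V 1)) (V 3))) (V 1) (Sc (V 1)))) (Sc (V 0))"])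
     (simp_all add: rec_basic ndiv_def bs_def ndefs)

definition pow2 :: "nat \<Rightarrow> nat" where "pow2 n = pr (\<lambda>acc i. acc + acc) 1 n"

lemma pow2_eq: "pow2 n = 2 ^ n"
  by (induction n) (auto simp: pow2_def)

lemma rec1_pow2: "rec1 pow2"
  by (rule rec1I[where e="PR (K 1) (A2 (+) (V 0) (V 0)) (V 0)"]) (simp_all add: rec_basic pow2_def)

lemma rec1_div2: "rec1 (\<lambda>x. x div 2)"
  by (rule rec1I[where e="A2 ndiv (V 0) (K 2)"]) (simp_all add: rec2_ndiv ndiv_eq)

lemma rec1_even: "rec1 (\<lambda>x. of_bool (even x))"
  by (rule rec1I[where e="A2 neq (V 0) (A2 (*) (K 2) (A1 (\<lambda>x. x div 2) (V 0)))"])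
     (auto simp: rec_basic rec1_div2 neq_def, presburger+)

lemma rec1_mod2: "rec1 (\<lambda>x. x mod 2)"
  by (rule rec1I[where e="A2 (-) (V 0) (A2 (*) (K 2) (A1 (\<lambda>x. x div 2) (V 0)))"])
     (auto simp: rec_basic rec1_div2, presburger)

section \<open>Rationals as triples\<close>

definition mk :: "nat \<Rightarrow> nat \<Rightarrow> nat \<Rightarrow> nat" where "mk P N M = penc P (penc N M)"
definition rP :: "nat \<Rightarrow> nat" where "rP t = pd1 t"
definition rN :: "nat \<Rightarrow> nat" where "rN t = pd1 (pd2 t)"
definition rM :: "nat \<Rightarrow> nat" where "rM t = pd2 (pd2 t)"

lemma r_mk [simp]: "rP (mk P N M) = P" "rN (mk P N M) = N" "rM (mk P N M) = M"
  by (simp_all add: mk_def rP_def rN_def rM_def)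

definition rv :: "nat \<Rightarrow> real" where
  "rv t = (real (rP t) - real (rN t)) / (real (rM t) + 1)"

lemma rv_mk: "rv (mk P N M) = (real P - real N) / (real M + 1)"
  by (simp add: rv_def)

lemma r0 [simp]: "rP 0 = 0" "rN 0 = 0" "rM 0 = 0"
  by (simp_all add: rP_def rN_def rM_def)

lemma rv0 [simp]: "rv 0 = 0" by (simp add: rv_def)

definition radd :: "nat \<Rightarrow> nat \<Rightarrow> nat" where
  "radd a b = mk (rP a * (rM b + 1) + rP b * (rM a + 1)) (rN a * (rM b + 1) + rN b * (rM a + 1))
                 ((rM a + 1) * (rM b + 1) - 1)"
definition rneg :: "nat \<Rightarrow> nat" where "rneg a = mk (rN a) (rP a) (rM a)"
definition rsub :: "nat \<Rightarrow> nat \<Rightarrow> nat" where "rsub a b = radd a (rneg b)"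
definition rle :: "nat \<Rightarrow> nat \<Rightarrow> bool" where
  "rle a b \<longleftrightarrow> rP a * (rM b + 1) + rN b * (rM a + 1) \<le> rP b * (rM a + 1) + rN a * (rM b + 1)"
definition rlt :: "nat \<Rightarrow> nat \<Rightarrow> bool" where
  "rlt a b \<longleftrightarrow> rP a * (rM b + 1) + rN b * (rM a + 1) < rP b * (rM a + 1) + rN a * (rM b + 1)"
definition rabs :: "nat \<Rightarrow> nat" where "rabs a = (if rle 0 a then a else rneg a)"
definition rmax :: "nat \<Rightarrow> nat \<Rightarrow> nat" where "rmax a b = (if rle a b then b else a)"
definition dy :: "nat \<Rightarrow> nat \<Rightarrow> nat" where "dy k n = mk k 0 (pow2 n - 1)"
definition rfl :: "nat \<Rightarrow> nat \<Rightarrow> nat" where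
  "rfl t n = ndiv ((rP t - rN t) * pow2 n) (rM t + 1)"
definition fromcode :: "nat \<Rightarrow> nat" where
  "fromcode c = (if even (pd1 c) then mk (pd1 c div 2) 0 (pd2 c) else mk 0 (pd1 c div 2 + 1) (pd2 c))"
definition tocode :: "nat \<Rightarrow> nat" where
  "tocode t = penc (if rN t \<le> rP t then 2 * (rP t - rN t) else 2 * (rN t - rP t - 1) + 1) (rM t)"

lemma rv_radd [simp]: "rv (radd a b) = rv a + rv b"
proof -
  have pos: "1 \<le> (rM a + 1) * (rM b + 1)" by simp
  have e: "real ((rM a + 1) * (rM b + 1) - 1) + 1 = (real (rM a) + 1) * (real (rM b) + 1)"
    using pos by (simp add: of_nat_diff algebra_simps)
  show ?thesis
    unfolding radd_def rv_mk e unfolding rv_def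
    by (simp add: field_simps)
qed

lemma rv_rneg [simp]: "rv (rneg a) = - rv a"
  by (simp add: rneg_def rv_mk rv_def field_simps)

lemma rv_rsub [simp]: "rv (rsub a b) = rv a - rv b"
  by (simp add: rsub_def)

lemma rle_iff: "rle a b \<longleftrightarrow> rv a \<le> rv b"
proof -
  have "rv a \<le> rv b \<longleftrightarrow> (real (rP a) - real (rN a)) * (real (rM b) + 1) \<le> (real (rP b) - real (rN b)) * (real (rM a) + 1)"
    unfolding rv_def by (simp add: divide_le_eq le_divide_eq field_simps add_pos_pos)
  also have "\<dots> \<longleftrightarrow> real (rP a * (rM b + 1) + rN b * (rM a + 1)) \<le> real (rP b * (rM a + 1) + rN a * (rM b + 1))"
    by (simp add: algebra_simps)
  finally show ?thesis unfolding rle_def of_nat_le_iff by simp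
qed

lemma rlt_iff: "rlt a b \<longleftrightarrow> rv a < rv b"
proof -
  have "rv a < rv b \<longleftrightarrow> (real (rP a) - real (rN a)) * (real (rM b) + 1) < (real (rP b) - real (rN b)) * (real (rM a) + 1)"
    unfolding rv_def by (simp add: divide_less_eq less_divide_eq field_simps add_pos_pos)
  also have "\<dots> \<longleftrightarrow> real (rP a * (rM b + 1) + rN b * (rM a + 1)) < real (rP b * (rM a + 1) + rN a * (rM b + 1))"
    by (simp add: algebra_simps)
  finally show ?thesis unfolding rlt_def of_nat_less_iff by simp
qed

lemma rv_rabs [simp]: "rv (rabs a) = \<bar>rv a\<bar>"
  by (simp add: rabs_def rle_iff)

lemma rv_rmax [simp]: "rv (rmax a b) = max (rv a) (rv b)"
  by (simp add: rmax_def rle_iff)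

lemma rv_dy [simp]: "rv (dy k n) = real k / 2 ^ n"
proof -
  have "1 \<le> (2::nat) ^ n" by simp
  then have "real (2 ^ n - 1) + 1 = 2 ^ n" by (simp add: of_nat_diff)
  then show ?thesis by (simp add: dy_def rv_mk pow2_eq)
qed

lemma rfl_eq:
  assumes "0 \<le> rv t"
  shows "rfl t n = nat \<lfloor>rv t * 2 ^ n\<rfloor>"
proof -
  have NP: "rN t \<le> rP t"
    using assms unfolding rv_def by (simp add: divide_nonneg_pos add_pos_pos zero_le_divide_iff)
  have "rv t * 2 ^ n = real ((rP t - rN t) * 2 ^ n) / real (rM t + 1)"
    using NP unfolding rv_def by (simp add: of_nat_diff field_simps)
  then have "\<lfloor>rv t * 2 ^ n\<rfloor> = int (((rP t - rN t) * 2 ^ n) div (rM t + 1))"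
    by (simp only: floor_divide_of_nat_eq)
  then show ?thesis unfolding rfl_def by (simp add: ndiv_eq pow2_eq)
qed

lemma int_decode_eq_cases:
  "int_decode a = (if even a then int (a div 2) else - int (a div 2) - 1)"
  unfolding int_decode_def sum_decode_def by simp

lemma rv_fromcode [simp]: "rv (fromcode c) = real_of_code c"
proof -
  have pd: "prod_decode c = (pd1 c, pd2 c)" by (rule prod_decode_pd)
  show ?thesis
    unfolding fromcode_def real_of_code_def pd
    by (auto simp: rv_mk int_decode_eq_cases algebra_simps)
qed

lemma real_of_code_tocode [simp]: "real_of_code (tocode t) = rv t"
proof -
  let ?a = "(if rN t \<le> rP t then 2 * (rP t - rN t) else 2 * (rN t - rP t - 1) + 1)"
  have i: "int_decode ?a = int (rP t) - int (rN t)"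
    by (auto simp: int_decode_eq_cases)
  have "real_of_code (tocode t) = real_of_int (int_decode ?a) / (real (rM t) + 1)"
    unfolding tocode_def real_of_code_def penc_def by simp
  also have "\<dots> = rv t" unfolding i rv_def by simp
  finally show ?thesis .
qed

lemma rec3_mk: "rec3 mk"
  by (rule rec3I[where e="A2 penc (V 0) (A2 penc (V 1) (V 2))"]) (simp_all add: rec2_penc mk_def)
lemma rec1_rP: "rec1 rP" by (rule rec1I[where e="A1 pd1 (V 0)"]) (simp_all add: rec1_pd1 rP_def)
lemma rec1_rN: "rec1 rN" by (rule rec1I[where e="A1 pd1 (A1 pd2 (V 0))"]) (simp_all add: rec1_pd1 rec1_pd2 rN_def)
lemma rec1_rM: "rec1 rM" by (rule rec1I[where e="A1 pd2 (A1 pd2 (V 0))"]) (simp_all add: rec1_pd2 rM_def)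

lemmas rec_r = rec3_mk rec1_rP rec1_rN rec1_rM

lemma rec2_radd: "rec2 radd"
  by (rule rec2I[where e="A3 mk
     (A2 (+) (A2 (*) (A1 rP (V 0)) (Sc (A1 rM (V 1)))) (A2 (*) (A1 rP (V 1)) (Sc (A1 rM (V 0)))))
     (A2 (+) (A2 (*) (A1 rN (V 0)) (Sc (A1 rM (V 1)))) (A2 (*) (A1 rN (V 1)) (Sc (A1 rM (V 0)))))
     (A2 (-) (A2 (*) (Sc (A1 rM (V 0))) (Sc (A1 rM (V 1)))) (K 1))"])
     (simp_all add: rec_basic rec_r radd_def)

lemma rec1_rneg: "rec1 rneg"
  by (rule rec1I[where e="A3 mk (A1 rN (V 0)) (A1 rP (V 0)) (A1 rM (V 0))"]) (simp_all add: rec_r rneg_def)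

lemma rec2_rsub: "rec2 rsub"
  by (rule rec2I[where e="A2 radd (V 0) (A1 rneg (V 1))"]) (simp_all add: rec2_radd rec1_rneg rsub_def)

lemma rec2_rle: "rec2 (\<lambda>a b. of_bool (rle a b))"
  by (rule rec2I[where e="A2 nle
     (A2 (+) (A2 (*) (A1 rP (V 0)) (Sc (A1 rM (V 1)))) (A2 (*) (A1 rN (V 1)) (Sc (A1 rM (V 0)))))
     (A2 (+) (A2 (*) (A1 rP (V 1)) (Sc (A1 rM (V 0)))) (A2 (*) (A1 rN (V 0)) (Sc (A1 rM (V 1)))))"])
     (simp_all add: rec_basic rec_r rle_def nle_def)

lemma rec2_rlt: "rec2 (\<lambda>a b. of_bool (rlt a b))"
  by (rule rec2I[where e="A2 nlt
     (A2 (+) (A2 (*) (A1 rP (V 0)) (Sc (A1 rM (V 1)))) (A2 (*) (A1 rN (V 1)) (Sc (A1 rM (V 0)))))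
     (A2 (+) (A2 (*) (A1 rP (V 1)) (Sc (A1 rM (V 0)))) (A2 (*) (A1 rN (V 0)) (Sc (A1 rM (V 1)))))"])
     (simp_all add: rec_basic rec_r rlt_def nlt_def)

lemma rec1_rabs: "rec1 rabs"
  by (rule rec1I[where e="A3 cond (A2 (\<lambda>a b. of_bool (rle a b)) (K 0) (V 0)) (V 0) (A1 rneg (V 0))"])
     (simp_all add: rec_basic rec2_rle rec1_rneg rabs_def)

lemma rec2_rmax: "rec2 rmax"
  by (rule rec2I[where e="A3 cond (A2 (\<lambda>a b. of_bool (rle a b)) (V 0) (V 1)) (V 1) (V 0)"])
     (simp_all add: rec_basic rec2_rle rmax_def)

lemma rec2_dy: "rec2 dy"
  by (rule rec2I[where e="A3 mk (V 0) (K 0) (A2 (-) (A1 pow2 (V 1)) (K 1))"])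
     (simp_all add: rec_basic rec_r rec1_pow2 dy_def)

lemma rec2_rfl: "rec2 rfl"
  by (rule rec2I[where e="A2 ndiv (A2 (*) (A2 (-) (A1 rP (V 0)) (A1 rN (V 0))) (A1 pow2 (V 1))) (Sc (A1 rM (V 0)))"])
     (simp_all add: rec_basic rec_r rec1_pow2 rec2_ndiv rfl_def)

lemma rec1_fromcode: "rec1 fromcode"
  by (rule rec1I[where e="A3 cond (A1 (\<lambda>x. of_bool (even x)) (A1 pd1 (V 0)))
      (A3 mk (A1 (\<lambda>x. x div 2) (A1 pd1 (V 0))) (K 0) (A1 pd2 (V 0)))
      (A3 mk (K 0) (Sc (A1 (\<lambda>x. x div 2) (A1 pd1 (V 0)))) (A1 pd2 (V 0)))"])
     (simp_all add: rec_basic rec_r rec1_pd1 rec1_pd2 rec1_div2 rec1_even fromcode_def)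

lemma rec1_tocode: "rec1 tocode"
  by (rule rec1I[where e="A2 penc (A3 cond (A2 nle (A1 rN (V 0)) (A1 rP (V 0)))
        (A2 (*) (K 2) (A2 (-) (A1 rP (V 0)) (A1 rN (V 0))))
        (Sc (A2 (*) (K 2) (A2 (-) (A2 (-) (A1 rN (V 0)) (A1 rP (V 0))) (K 1)))))
      (A1 rM (V 0))"])
     (simp_all add: rec_basic rec_r rec2_penc tocode_def nle_def)

lemmas rec_rat = rec_r rec2_radd rec1_rneg rec2_rsub rec2_rle rec2_rlt rec1_rabs rec2_rmax rec2_dy rec2_rfl
   rec1_fromcode rec1_tocode

section \<open>The stage computation\<close>

definition rec5 :: "(nat \<Rightarrow> nat \<Rightarrow> nat \<Rightarrow> nat \<Rightarrow> nat \<Rightarrow> nat) \<Rightarrow> bool" where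
  "rec5 f \<longleftrightarrow> recfn 5 (\<lambda>xs. f (xs ! 0) (xs ! 1) (xs ! 2) (xs ! 3) (xs ! 4))"
definition A5 :: "(nat \<Rightarrow> nat \<Rightarrow> nat \<Rightarrow> nat \<Rightarrow> nat \<Rightarrow> nat) \<Rightarrow> ex \<Rightarrow> ex \<Rightarrow> ex \<Rightarrow> ex \<Rightarrow> ex \<Rightarrow> ex" where
  "A5 f a b c d e = Fn (\<lambda>xs. f (xs ! 0) (xs ! 1) (xs ! 2) (xs ! 3) (xs ! 4)) [a, b, c, d, e]"
lemma ev_A5 [simp]: "ev (A5 f a b c d e) env = f (ev a env) (ev b env) (ev c env) (ev d env) (ev e env)"
  by (simp add: A5_def)
lemma wfe_A5 [simp]: "wfe m (A5 f a b c d e) = (rec5 f \<and> wfe m a \<and> wfe m b \<and> wfe m c \<and> wfe m d \<and> wfe m e)"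
  by (simp add: A5_def rec5_def eval_nat_numeral)
lemma rec5I: "wfe 5 e \<Longrightarrow> (\<And>x y z w u. ev e [x, y, z, w, u] = f x y z w u) \<Longrightarrow> rec5 f"
  unfolding rec5_def
  by (rule recfn_ex) (auto simp: length_Suc_conv eval_nat_numeral)

definition Xf :: "(nat \<Rightarrow> nat) \<Rightarrow> nat \<Rightarrow> nat" where "Xf f t = fromcode (f (2 * t))"
definition Ef :: "(nat \<Rightarrow> nat) \<Rightarrow> nat \<Rightarrow> nat" where "Ef f m = f (2 * m + 1)"
definition ivA :: "nat \<Rightarrow> nat" where "ivA k = fromcode (pd1 k)"
definition ivB :: "nat \<Rightarrow> nat" where "ivB k = fromcode (pd2 k)"

definition vl :: "(nat \<Rightarrow> nat) \<Rightarrow> nat \<Rightarrow> nat \<Rightarrow> nat" where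
  "vl f t m = radd (rmax (rabs (rsub (Xf f t) (ivA (Ef f m - 1)))) (rabs (rsub (Xf f t) (ivB (Ef f m - 1))))) (dy 1 t)"

definition dstep :: "(nat \<Rightarrow> nat) \<Rightarrow> nat \<Rightarrow> nat \<Rightarrow> nat" where
  "dstep f acc j = (if Ef f (pd2 j) = 0 then acc
      else if acc = 0 then Suc (vl f (pd1 j) (pd2 j))
      else if rlt (vl f (pd1 j) (pd2 j)) (acc - 1) then Suc (vl f (pd1 j) (pd2 j)) else acc)"

definition Dst :: "(nat \<Rightarrow> nat) \<Rightarrow> nat \<Rightarrow> nat" where "Dst f s = pr (dstep f) 0 s"

definition flr :: "(nat \<Rightarrow> nat) \<Rightarrow> nat \<Rightarrow> nat \<Rightarrow> nat" where
  "flr f s n = (if Dst f s = 0 then 0 else rfl (Dst f s - 1) n)"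

definition lo :: "(nat \<Rightarrow> nat) \<Rightarrow> nat \<Rightarrow> nat \<Rightarrow> nat \<Rightarrow> nat" where
  "lo f s side n = (if side = 0 then rsub (Xf f n) (dy (flr f s n + 2) n)
                    else rsub (radd (Xf f n) (dy (flr f s n) n)) (dy 1 n))"
definition hi :: "(nat \<Rightarrow> nat) \<Rightarrow> nat \<Rightarrow> nat \<Rightarrow> nat \<Rightarrow> nat" where
  "hi f s side n = (if side = 0 then rsub (radd (Xf f n) (dy 1 n)) (dy (flr f s n) n)
                    else radd (Xf f n) (dy (flr f s n + 2) n))"

definition nestep :: "(nat \<Rightarrow> nat) \<Rightarrow> nat \<Rightarrow> nat \<Rightarrow> nat \<Rightarrow> nat" where
  "nestep f cc acc m = (if acc \<noteq> 0 \<and> (Ef f m = 0 \<or> \<not> (rle (ivA cc) (ivA (Ef f m - 1)) \<and> rle (ivB (Ef f m - 1)) (ivB cc)))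
                       then 1 else 0)"
definition noenum :: "(nat \<Rightarrow> nat) \<Rightarrow> nat \<Rightarrow> nat \<Rightarrow> nat" where
  "noenum f s cc = pr (nestep f cc) 1 s"

definition cert :: "(nat \<Rightarrow> nat) \<Rightarrow> nat \<Rightarrow> nat \<Rightarrow> nat \<Rightarrow> bool" where
  "cert f s side k \<longleftrightarrow> Dst f s \<noteq> 0 \<and> rlt (ivA (pd1 k)) (lo f s side (pd2 k)) \<and>
       rlt (hi f s side (pd2 k)) (ivB (pd1 k)) \<and> noenum f s (pd1 k) \<noteq> 0"

definition nocert :: "(nat \<Rightarrow> nat) \<Rightarrow> nat \<Rightarrow> nat \<Rightarrow> nat \<Rightarrow> nat" where
  "nocert f s side k = pr (\<lambda>acc k'. if 0 < acc \<and> \<not> cert f s side k' then 1 else 0) 1 k"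

definition inst :: "(nat \<Rightarrow> nat) \<Rightarrow> nat \<Rightarrow> nat \<Rightarrow> nat \<Rightarrow> nat" where
  "inst f s side k = of_bool (cert f s side k \<and> nocert f s side k \<noteq> 0)"

definition name :: "(nat \<Rightarrow> nat) \<Rightarrow> nat \<Rightarrow> nat \<Rightarrow> nat \<Rightarrow> nat" where
  "name f s side m = tocode (if side = 0 then rsub (Xf f (Suc m)) (dy (flr f s (Suc m)) (Suc m))
                             else radd (Xf f (Suc m)) (dy (flr f s (Suc m)) (Suc m)))"

definition stage :: "(nat \<Rightarrow> nat) \<Rightarrow> nat \<Rightarrow> nat \<Rightarrow> nat" where
  "stage f s j = (if pd1 j = 0 then inst f s 0 (pd2 j) else if pd1 j = 1 then inst f s 1 (pd2 j)
       else if pd1 j = 2 then name f s 0 (pd2 j) else if pd1 j = 3 then name f s 1 (pd2 j) else 0)"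

definition stagec :: "nat \<Rightarrow> nat \<Rightarrow> nat" where
  "stagec n c = stage (lnth c) (pd1 n) (pd2 n)"

definition mainK :: "nat \<Rightarrow> nat" where
  "mainK = assoc (\<lambda>n. 2 * n + 4) stagec"

lemma rec1_ivA: "rec1 ivA" by (rule rec1I[where e="A1 fromcode (A1 pd1 (V 0))"]) (simp_all add: rec_rat rec1_pd1 ivA_def)
lemma rec1_ivB: "rec1 ivB" by (rule rec1I[where e="A1 fromcode (A1 pd2 (V 0))"]) (simp_all add: rec_rat rec1_pd2 ivB_def)

lemma rec2_Xf: "rec2 (\<lambda>c t. Xf (lnth c) t)"
  by (rule rec2I[where e="A1 fromcode (A2 lnth (V 0) (A2 (*) (K 2) (V 1)))"])
     (simp_all add: rec_rat rec_basic rec2_lnth Xf_def)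
lemma rec2_Ef: "rec2 (\<lambda>c m. Ef (lnth c) m)"
  by (rule rec2I[where e="A2 lnth (V 0) (Sc (A2 (*) (K 2) (V 1)))"])
     (simp_all add: rec_basic rec2_lnth Ef_def)

lemma rec3_vl: "rec3 (\<lambda>c t m. vl (lnth c) t m)"
  by (rule rec3I[where e="A2 radd (A2 rmax
        (A1 rabs (A2 rsub (A2 (\<lambda>c t. Xf (lnth c) t) (V 0) (V 1)) (A1 ivA (A2 (-) (A2 (\<lambda>c m. Ef (lnth c) m) (V 0) (V 2)) (K 1)))))
        (A1 rabs (A2 rsub (A2 (\<lambda>c t. Xf (lnth c) t) (V 0) (V 1)) (A1 ivB (A2 (-) (A2 (\<lambda>c m. Ef (lnth c) m) (V 0) (V 2)) (K 1))))))
      (A2 dy (K 1) (V 1))"])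
     (simp_all add: rec_rat rec_basic rec2_Xf rec2_Ef rec1_ivA rec1_ivB vl_def)

lemma rec3_dstep: "rec3 (\<lambda>c acc j. dstep (lnth c) acc j)"
  by (rule rec3I[where e="A3 cond (A2 neq (A2 (\<lambda>c m. Ef (lnth c) m) (V 0) (A1 pd2 (V 2))) (K 0)) (V 1)
     (A3 cond (A2 neq (V 1) (K 0)) (Sc (A3 (\<lambda>c t m. vl (lnth c) t m) (V 0) (A1 pd1 (V 2)) (A1 pd2 (V 2))))
     (A3 cond (A2 (\<lambda>a b. of_bool (rlt a b)) (A3 (\<lambda>c t m. vl (lnth c) t m) (V 0) (A1 pd1 (V 2)) (A1 pd2 (V 2))) (A2 (-) (V 1) (K 1)))
        (Sc (A3 (\<lambda>c t m. vl (lnth c) t m) (V 0) (A1 pd1 (V 2)) (A1 pd2 (V 2)))) (V 1)))"])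
     (simp_all add: rec_rat rec_basic rec2_Ef rec3_vl rec1_pd1 rec1_pd2 dstep_def ndefs)

lemma rec2_Dst: "rec2 (\<lambda>c s. Dst (lnth c) s)"
  by (rule rec2I[where e="PR (K 0) (A3 (\<lambda>c acc j. dstep (lnth c) acc j) (V 2) (V 0) (V 1)) (V 1)"])
     (simp_all add: rec3_dstep Dst_def)

lemma rec3_flr: "rec3 (\<lambda>c s n. flr (lnth c) s n)"
  by (rule rec3I[where e="A3 cond (A2 neq (A2 (\<lambda>c s. Dst (lnth c) s) (V 0) (V 1)) (K 0)) (K 0)
        (A2 rfl (A2 (-) (A2 (\<lambda>c s. Dst (lnth c) s) (V 0) (V 1)) (K 1)) (V 2))"])
     (simp_all add: rec_rat rec_basic rec2_Dst flr_def ndefs)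

lemma rec4_lo: "rec4 (\<lambda>c s side n. lo (lnth c) s side n)"
  by (rule rec4I[where e="A3 cond (A2 neq (V 2) (K 0))
      (A2 rsub (A2 (\<lambda>c t. Xf (lnth c) t) (V 0) (V 3)) (A2 dy (Sc (Sc (A3 (\<lambda>c s n. flr (lnth c) s n) (V 0) (V 1) (V 3)))) (V 3)))
      (A2 rsub (A2 radd (A2 (\<lambda>c t. Xf (lnth c) t) (V 0) (V 3)) (A2 dy (A3 (\<lambda>c s n. flr (lnth c) s n) (V 0) (V 1) (V 3)) (V 3))) (A2 dy (K 1) (V 3)))"])
     (simp_all add: rec_rat rec_basic rec2_Xf rec3_flr lo_def ndefs)

lemma rec4_hi: "rec4 (\<lambda>c s side n. hi (lnth c) s side n)"
  by (rule rec4I[where e="A3 cond (A2 neq (V 2) (K 0))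
      (A2 rsub (A2 radd (A2 (\<lambda>c t. Xf (lnth c) t) (V 0) (V 3)) (A2 dy (K 1) (V 3))) (A2 dy (A3 (\<lambda>c s n. flr (lnth c) s n) (V 0) (V 1) (V 3)) (V 3)))
      (A2 radd (A2 (\<lambda>c t. Xf (lnth c) t) (V 0) (V 3)) (A2 dy (Sc (Sc (A3 (\<lambda>c s n. flr (lnth c) s n) (V 0) (V 1) (V 3)))) (V 3)))"])
     (simp_all add: rec_rat rec_basic rec2_Xf rec3_flr hi_def ndefs)

lemma rec4_nestep: "rec4 (\<lambda>c cc acc m. nestep (lnth c) cc acc m)"
  by (rule rec4I[where e="A3 cond (A2 nand (V 2)
        (A3 cond (A2 neq (A2 (\<lambda>c m. Ef (lnth c) m) (V 0) (V 3)) (K 0)) (K 1)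
          (A1 nnot (A2 nand (A2 (\<lambda>a b. of_bool (rle a b)) (A1 ivA (V 1)) (A1 ivA (A2 (-) (A2 (\<lambda>c m. Ef (lnth c) m) (V 0) (V 3)) (K 1))))
                            (A2 (\<lambda>a b. of_bool (rle a b)) (A1 ivB (A2 (-) (A2 (\<lambda>c m. Ef (lnth c) m) (V 0) (V 3)) (K 1))) (A1 ivB (V 1)))))))
      (K 1) (K 0)"])
     (simp_all add: rec_rat rec_basic rec2_Ef rec1_ivA rec1_ivB nestep_def ndefs)

lemma rec3_noenum: "rec3 (\<lambda>c s cc. noenum (lnth c) s cc)"
  by (rule rec3I[where e="PR (K 1) (A4 (\<lambda>c cc acc m. nestep (lnth c) cc acc m) (V 2) (V 4) (V 0) (V 1)) (V 1)"])
     (simp_all add: rec4_nestep noenum_def)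

lemma rec4_cert: "rec4 (\<lambda>c s side k. of_bool (cert (lnth c) s side k))"
  by (rule rec4I[where e="A2 nand (A1 nnot (A2 neq (A2 (\<lambda>c s. Dst (lnth c) s) (V 0) (V 1)) (K 0)))
     (A2 nand (A2 (\<lambda>a b. of_bool (rlt a b)) (A1 ivA (A1 pd1 (V 3))) (A4 (\<lambda>c s side n. lo (lnth c) s side n) (V 0) (V 1) (V 2) (A1 pd2 (V 3))))
      (A2 nand (A2 (\<lambda>a b. of_bool (rlt a b)) (A4 (\<lambda>c s side n. hi (lnth c) s side n) (V 0) (V 1) (V 2) (A1 pd2 (V 3))) (A1 ivB (A1 pd1 (V 3))))
        (A3 (\<lambda>c s cc. noenum (lnth c) s cc) (V 0) (V 1) (A1 pd1 (V 3)))))"])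
     (simp_all add: rec_rat rec_basic rec2_Dst rec1_ivA rec1_ivB rec4_lo rec4_hi rec3_noenum rec1_pd1 rec1_pd2 cert_def ndefs)

lemma rec5_nocert_step: "rec5 (\<lambda>c s side acc k'. if 0 < acc \<and> \<not> cert (lnth c) s side k' then 1 else 0)"
  by (rule rec5I[where e="A3 cond (A2 nand (V 3) (A1 nnot (A4 (\<lambda>c s side k. of_bool (cert (lnth c) s side k)) (V 0) (V 1) (V 2) (V 4)))) (K 1) (K 0)"])
     (simp_all add: rec_basic rec4_cert ndefs)

lemma rec4_nocert: "rec4 (\<lambda>c s side k. nocert (lnth c) s side k)"
  by (rule rec4I[where e="PR (K 1) (A5 (\<lambda>c s side acc k'. if 0 < acc \<and> \<not> cert (lnth c) s side k' then 1 else 0) (V 2) (V 3) (V 4) (V 0) (V 1)) (V 3)"])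
     (simp_all add: rec5_nocert_step nocert_def)

lemma rec4_inst: "rec4 (\<lambda>c s side k. inst (lnth c) s side k)"
  by (rule rec4I[where e="A2 nand (A4 (\<lambda>c s side k. of_bool (cert (lnth c) s side k)) (V 0) (V 1) (V 2) (V 3))
         (A4 (\<lambda>c s side k. nocert (lnth c) s side k) (V 0) (V 1) (V 2) (V 3))"])
     (simp_all add: rec_basic rec4_cert rec4_nocert inst_def ndefs)

lemma rec4_name: "rec4 (\<lambda>c s side m. name (lnth c) s side m)"
  by (rule rec4I[where e="A1 tocode (A3 cond (A2 neq (V 2) (K 0))
       (A2 rsub (A2 (\<lambda>c t. Xf (lnth c) t) (V 0) (Sc (V 3))) (A2 dy (A3 (\<lambda>c s n. flr (lnth c) s n) (V 0) (V 1) (Sc (V 3))) (Sc (V 3))))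
       (A2 radd (A2 (\<lambda>c t. Xf (lnth c) t) (V 0) (Sc (V 3))) (A2 dy (A3 (\<lambda>c s n. flr (lnth c) s n) (V 0) (V 1) (Sc (V 3))) (Sc (V 3)))))"])
     (simp_all add: rec_rat rec_basic rec2_Xf rec3_flr name_def ndefs)

lemma rec2_stagec: "rec2 stagec"
  by (rule rec2I[where e="A3 cond (A2 neq (A1 pd1 (A1 pd2 (V 0))) (K 0)) (A4 (\<lambda>c s side k. inst (lnth c) s side k) (V 1) (A1 pd1 (V 0)) (K 0) (A1 pd2 (A1 pd2 (V 0))))
     (A3 cond (A2 neq (A1 pd1 (A1 pd2 (V 0))) (K 1)) (A4 (\<lambda>c s side k. inst (lnth c) s side k) (V 1) (A1 pd1 (V 0)) (K 1) (A1 pd2 (A1 pd2 (V 0))))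
     (A3 cond (A2 neq (A1 pd1 (A1 pd2 (V 0))) (K 2)) (A4 (\<lambda>c s side m. name (lnth c) s side m) (V 1) (A1 pd1 (V 0)) (K 0) (A1 pd2 (A1 pd2 (V 0))))
     (A3 cond (A2 neq (A1 pd1 (A1 pd2 (V 0))) (K 3)) (A4 (\<lambda>c s side m. name (lnth c) s side m) (V 1) (A1 pd1 (V 0)) (K 1) (A1 pd2 (A1 pd2 (V 0))))
      (K 0))))"])
     (simp_all add: rec_basic rec4_inst rec4_name rec1_pd1 rec1_pd2 stagec_def stage_def ndefs)

lemma computable_mainK: "computable_nat mainK"
  unfolding mainK_def
  by (rule rec_assoc[OF _ rec2_stagec], rule rec1I[where e="A2 (+) (A2 (*) (K 2) (V 0)) (K 4)"])
     (simp_all add: rec_basic)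

section \<open>Locality of the stage computation\<close>

context
  fixes f g :: "nat \<Rightarrow> nat" and N :: nat
  assumes agree: "\<And>i. i < N \<Longrightarrow> f i = g i"
begin

lemma Xf_loc: "2 * t < N \<Longrightarrow> Xf f t = Xf g t"
  by (simp add: Xf_def agree)
lemma Ef_loc: "2 * m + 1 < N \<Longrightarrow> Ef f m = Ef g m"
  by (simp add: Ef_def agree)
lemma vl_loc: "2 * t < N \<Longrightarrow> 2 * m + 1 < N \<Longrightarrow> vl f t m = vl g t m"
  by (simp add: vl_def Xf_loc Ef_loc)

lemma Dst_loc: "2 * s \<le> N \<Longrightarrow> Dst f s = Dst g s"
proof (induction s)
  case 0 then show ?case by (simp add: Dst_def)
next
  case (Suc s)
  have a: "2 * pd1 s < N" "2 * pd2 s + 1 < N" using pd_le[of s] Suc.prems by (simp_all only: mult_Suc_right)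
  have "dstep f acc s = dstep g acc s" for acc
    unfolding dstep_def using Ef_loc[OF a(2)] vl_loc[OF a] by simp
  then show ?case using Suc by (simp add: Dst_def)
qed

lemma flr_loc: "2 * s \<le> N \<Longrightarrow> flr f s n = flr g s n"
  by (simp add: flr_def Dst_loc)

lemma lo_loc: "2 * s \<le> N \<Longrightarrow> 2 * n < N \<Longrightarrow> lo f s side n = lo g s side n"
  by (simp add: lo_def flr_loc Xf_loc)
lemma hi_loc: "2 * s \<le> N \<Longrightarrow> 2 * n < N \<Longrightarrow> hi f s side n = hi g s side n"
  by (simp add: hi_def flr_loc Xf_loc)

lemma noenum_loc: "2 * s \<le> N \<Longrightarrow> noenum f s cc = noenum g s cc"
proof (induction s)
  case 0 then show ?case by (simp add: noenum_def)
next
  case (Suc s)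
  have a: "2 * s + 1 < N" using Suc.prems by (simp only: mult_Suc_right)
  have "nestep f cc acc s = nestep g cc acc s" for acc
    unfolding nestep_def using Ef_loc[OF a] by simp
  then show ?case using Suc by (simp add: noenum_def)
qed

lemma cert_loc: "2 * s \<le> N \<Longrightarrow> 2 * k < N \<Longrightarrow> cert f s side k = cert g s side k"
proof -
  assume a: "2 * s \<le> N" "2 * k < N"
  have "2 * pd2 k < N" using pd_le[of k] a by linarith
  then show ?thesis unfolding cert_def using a by (simp add: Dst_loc lo_loc hi_loc noenum_loc)
qed

lemma nocert_loc: "2 * s \<le> N \<Longrightarrow> 2 * k \<le> N \<Longrightarrow> nocert f s side k = nocert g s side k"
proof (induction k)
  case 0 then show ?case by (simp add: nocert_def)
next
  case (Suc k)
  have "cert f s side k = cert g s side k" using Suc.prems by (intro cert_loc) (simp_all only: mult_Suc_right)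
  then show ?case using Suc by (simp add: nocert_def)
qed

lemma inst_loc: "2 * s \<le> N \<Longrightarrow> 2 * k < N \<Longrightarrow> inst f s side k = inst g s side k"
  by (simp add: inst_def cert_loc nocert_loc)

lemma name_loc: "2 * s \<le> N \<Longrightarrow> 2 * m + 2 < N \<Longrightarrow> name f s side m = name g s side m"
proof -
  assume a: "2 * s \<le> N" "2 * m + 2 < N"
  then have "2 * Suc m < N" by simp
  then show ?thesis unfolding name_def using a by (simp add: flr_loc Xf_loc)
qed

lemma stage_loc: "2 * s \<le> N \<Longrightarrow> 2 * pd2 j + 2 < N \<Longrightarrow> stage f s j = stage g s j"
  unfolding stage_def by (simp add: inst_loc name_loc)

end

lemma tt_mainK: "tt_apply mainK p = Some (\<lambda>n. stage p (pd1 n) (pd2 n))"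
proof -
  have "stagec n (list_encode (map p [0..<2 * n + 4])) = stage p (pd1 n) (pd2 n)" for n
  proof -
    have ag: "\<And>i. i < 2 * n + 4 \<Longrightarrow> lnth (list_encode (map p [0..<2 * n + 4])) i = p i"
      by (rule lnth_map)
    have "pd1 n \<le> n" "pd2 (pd2 n) \<le> n" using pd_le[of n] pd_le[of "pd2 n"] by linarith+
    then show ?thesis unfolding stagec_def
      by (intro stage_loc[where N="2 * n + 4", OF ag]) linarith+
  qed
  then show ?thesis unfolding mainK_def tt_apply_assoc by simp
qed

lemma half_pow_lt: "0 < (e::real) \<Longrightarrow> \<exists>n. (1/2::real) ^ n < e"
  by (rule real_arch_pow_inv) simp_all

lemma half_pow_mono: "m \<le> n \<Longrightarrow> (1/2::real) ^ n \<le> (1/2) ^ m"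
  by (rule power_decreasing) simp_all

lemma rv_dy': "rv (dy k n) = real k * (1/2) ^ n"
  by (simp add: power_one_over)

lemma rv_ivA: "rv (ivA k) = fst (ivl_of_code k)"
  by (simp add: ivA_def ivl_of_code_def prod_decode_pd)
lemma rv_ivB: "rv (ivB k) = snd (ivl_of_code k)"
  by (simp add: ivB_def ivl_of_code_def prod_decode_pd)

lemma real_of_code_rat: "real_of_code c \<in> \<rat>"
  by (simp add: real_of_code_def case_prod_beta)

lemma rat_code: "r \<in> \<rat> \<Longrightarrow> \<exists>c. real_of_code c = r"
proof -
  assume "r \<in> \<rat>"
  then obtain a b where ab: "b > 0" "r = of_int a / of_int b" by (rule Rats_cases')
  have "real_of_code (prod_encode (int_encode a, nat b - 1)) = r"
    using ab by (simp add: real_of_code_def of_nat_diff)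
  then show ?thesis by blast
qed

lemma ivl_code: "a \<in> \<rat> \<Longrightarrow> b \<in> \<rat> \<Longrightarrow> \<exists>k. rv (ivA k) = a \<and> rv (ivB k) = b"
proof -
  assume "a \<in> \<rat>" "b \<in> \<rat>"
  then obtain ca cb where "real_of_code ca = a" "real_of_code cb = b" using rat_code by metis
  then have "rv (ivA (penc ca cb)) = a \<and> rv (ivB (penc ca cb)) = b"
    by (simp add: ivA_def ivB_def)
  then show ?thesis by blast
qed

lemma ivA_rat: "rv (ivA k) \<in> \<rat>" by (simp add: ivA_def real_of_code_rat)
lemma ivB_rat: "rv (ivB k) \<in> \<rat>" by (simp add: ivB_def real_of_code_rat)

lemma dist_lt_max: "a < y \<Longrightarrow> y < b \<Longrightarrow> \<bar>x - y\<bar> < max \<bar>x - a\<bar> \<bar>x - b\<bar>" for x y a b :: real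
  by (cases "y \<le> x") (auto simp: max_def abs_if)

locale setting =
  fixes p :: "nat \<Rightarrow> nat" and x :: real and A :: "real set"
  assumes xname: "\<And>t. \<bar>real_of_code (p (2 * t)) - x\<bar> \<le> (1/2) ^ t"
    and Aname: "names_closed_pos (\<lambda>m. p (2 * m + 1)) A"
    and Acl: "closed A" and Ane: "A \<noteq> {}"
begin

definition d :: real where "d = infdist x A"

lemma d_nonneg: "0 \<le> d" by (simp add: d_def infdist_nonneg)

lemma d_le: "y \<in> A \<Longrightarrow> d \<le> \<bar>x - y\<bar>"
  unfolding d_def using infdist_le[of y A x] by (simp add: dist_real_def)

lemma nearest: "\<exists>y\<in>A. \<bar>x - y\<bar> = d"
  using infdist_attains_inf[OF Acl Ane, of x] unfolding d_def dist_real_def by metis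

lemma Xf_close: "\<bar>rv (Xf p t) - x\<bar> \<le> (1/2) ^ t"
  using xname[of t] by (simp add: Xf_def)

lemma enum_meets:
  assumes "Ef p m = Suc k"
  shows "rv (ivA k) < rv (ivB k) \<and> (\<exists>y\<in>A. rv (ivA k) < y \<and> y < rv (ivB k))"
proof -
  have "Suc k = (\<lambda>m. p (2 * m + 1)) m" using assms by (simp add: Ef_def)
  then have "Suc k \<in> range (\<lambda>m. p (2 * m + 1))" by (metis rangeI)
  then have mem: "ivl_of_code k \<in> {ivl_of_code k | k. Suc k \<in> range (\<lambda>m. p (2 * m + 1))}" by blast
  have eq: "{ivl_of_code k | k. Suc k \<in> range (\<lambda>m. p (2 * m + 1))} = {(a, b). a \<in> \<rat> \<and> b \<in> \<rat> \<and> a < b \<and> (\<exists>y\<in>A. a < y \<and> y < b)}"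
    using Aname unfolding names_closed_pos_def .
  have "ivl_of_code k \<in> {(a, b). a \<in> \<rat> \<and> b \<in> \<rat> \<and> a < b \<and> (\<exists>y\<in>A. a < y \<and> y < b)}"
    using mem unfolding eq .
  then show ?thesis by (auto simp: rv_ivA rv_ivB case_prod_beta)
qed

lemma meets_enum:
  assumes "a \<in> \<rat>" "b \<in> \<rat>" "y \<in> A" "a < y" "y < b"
  shows "\<exists>m k. Ef p m = Suc k \<and> rv (ivA k) = a \<and> rv (ivB k) = b"
proof -
  have "(a, b) \<in> {(a, b). a \<in> \<rat> \<and> b \<in> \<rat> \<and> a < b \<and> (\<exists>y\<in>A. a < y \<and> y < b)}"
    using assms by auto
  then have "(a, b) \<in> {ivl_of_code k | k. Suc k \<in> range (\<lambda>m. p (2 * m + 1))}"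
    using Aname unfolding names_closed_pos_def by simp
  then obtain k m where "(a, b) = ivl_of_code k" "Suc k = p (2 * m + 1)" by auto
  then have "Ef p m = Suc k \<and> rv (ivA k) = a \<and> rv (ivB k) = b"
    by (simp add: rv_ivA rv_ivB Ef_def) (metis fst_conv snd_conv)
  then show ?thesis by blast
qed

definition ok :: "nat \<Rightarrow> bool" where "ok j \<longleftrightarrow> Ef p (pd2 j) \<noteq> 0"
definition VV :: "nat \<Rightarrow> real" where "VV j = rv (vl p (pd1 j) (pd2 j))"

lemma VV_eq:
  assumes "Ef p m = Suc k"
  shows "rv (vl p t m) = max \<bar>rv (Xf p t) - rv (ivA k)\<bar> \<bar>rv (Xf p t) - rv (ivB k)\<bar> + (1/2) ^ t"
  using assms by (simp add: vl_def power_one_over)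

lemma VV_gt: "ok j \<Longrightarrow> d < VV j"
proof -
  assume "ok j"
  then obtain k where k: "Ef p (pd2 j) = Suc k" unfolding ok_def by (cases "Ef p (pd2 j)") auto
  let ?t = "pd1 j"
  let ?a = "rv (ivA k)" and ?b = "rv (ivB k)" and ?xt = "rv (Xf p ?t)"
  obtain y where y: "y \<in> A" "?a < y" "y < ?b" using enum_meets[OF k] by blast
  have "d \<le> \<bar>x - y\<bar>" by (rule d_le[OF y(1)])
  also have "\<dots> < max \<bar>x - ?a\<bar> \<bar>x - ?b\<bar>" by (rule dist_lt_max[OF y(2,3)])
  also have "\<dots> \<le> max \<bar>?xt - ?a\<bar> \<bar>?xt - ?b\<bar> + (1/2) ^ ?t"
    using Xf_close[of ?t] by (simp add: max_def abs_if split: if_splits) linarith?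
  also have "\<dots> = VV j" unfolding VV_def using VV_eq[OF k] by simp
  finally show ?thesis .
qed

lemma Dst_char:
  "(Dst p s = 0 \<longleftrightarrow> (\<forall>j<s. \<not> ok j)) \<and>
   (Dst p s \<noteq> 0 \<longrightarrow> (\<exists>j<s. ok j \<and> rv (Dst p s - 1) = VV j) \<and> (\<forall>j<s. ok j \<longrightarrow> rv (Dst p s - 1) \<le> VV j))"
proof (induction s)
  case 0 then show ?case by (simp add: Dst_def)
next
  case (Suc s)
  have D: "Dst p (Suc s) = dstep p (Dst p s) s" by (simp add: Dst_def)
  show ?case
  proof (cases "ok s")
    case False
    then have "Dst p (Suc s) = Dst p s" unfolding D dstep_def ok_def by simp
    then show ?thesis using Suc False by (auto simp: less_Suc_eq)
  next
    case True
    show ?thesis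
    proof (cases "Dst p s = 0")
      case True0: True
      then have "Dst p (Suc s) = Suc (vl p (pd1 s) (pd2 s))" using True unfolding D dstep_def ok_def by simp
      then show ?thesis using Suc True True0 by (auto simp: less_Suc_eq VV_def)
    next
      case False0: False
      show ?thesis
      proof (cases "VV s < rv (Dst p s - 1)")
        case lt: True
        then have "Dst p (Suc s) = Suc (vl p (pd1 s) (pd2 s))"
          using True False0 unfolding D dstep_def ok_def VV_def by (simp add: rlt_iff)
        then show ?thesis using Suc True False0 lt by (fastforce simp: less_Suc_eq VV_def)
      next
        case ge: False
        then have "Dst p (Suc s) = Dst p s"
          using True False0 unfolding D dstep_def ok_def VV_def by (simp add: rlt_iff)
        then show ?thesis using Suc True False0 ge by (fastforce simp: less_Suc_eq VV_def)
      qed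
    qed
  qed
qed

lemma Dst_gt: "Dst p s \<noteq> 0 \<Longrightarrow> d < rv (Dst p s - 1)"
  using Dst_char[of s] VV_gt by force

lemma Dst_conv:
  assumes "0 < e"
  shows "\<exists>s0. \<forall>s\<ge>s0. Dst p s \<noteq> 0 \<and> rv (Dst p s - 1) < d + e"
proof -
  obtain y where y: "y \<in> A" "\<bar>x - y\<bar> = d" using nearest by blast
  obtain a where a: "a \<in> \<rat>" "y - e/4 < a" "a < y" using Rats_dense_in_real[of "y - e/4" y] assms by auto
  obtain b where b: "b \<in> \<rat>" "y < b" "b < y + e/4" using Rats_dense_in_real[of y "y + e/4"] assms by auto
  obtain m k where mk: "Ef p m = Suc k" "rv (ivA k) = a" "rv (ivB k) = b"
    using meets_enum[OF a(1) b(1) y(1) a(3) b(2)] by blast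
  obtain t where t: "(1/2::real) ^ t < e/4" using half_pow_lt[of "e/4"] assms by auto
  let ?j = "prod_encode (t, m)"
  have okj: "ok ?j" using mk by (simp add: ok_def)
  have "VV ?j = max \<bar>rv (Xf p t) - a\<bar> \<bar>rv (Xf p t) - b\<bar> + (1/2) ^ t"
    unfolding VV_def using VV_eq[OF mk(1)] mk by simp
  also have "\<dots> \<le> max \<bar>x - a\<bar> \<bar>x - b\<bar> + 2 * (1/2) ^ t"
    using Xf_close[of t] by (simp add: max_def abs_if split: if_splits) linarith?
  also have "\<dots> < d + e"
    using y(2) a b t by (simp add: max_def abs_if split: if_splits) linarith?
  finally have V: "VV ?j < d + e" .
  show ?thesis
  proof (intro exI allI impI)
    fix s assume "Suc ?j \<le> s"
    then have js: "?j < s" by simp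
    then have "Dst p s \<noteq> 0" using Dst_char[of s] okj by blast
    moreover have "rv (Dst p s - 1) \<le> VV ?j" using Dst_char[of s] okj js calculation by blast
    ultimately show "Dst p s \<noteq> 0 \<and> rv (Dst p s - 1) < d + e" using V by simp
  qed
qed

end

context setting
begin

definition fl :: "nat \<Rightarrow> nat" where "fl n = nat \<lfloor>d * 2 ^ n\<rfloor>"

lemma fl_bounds: "real (fl n) \<le> d * 2 ^ n" "d * 2 ^ n < real (fl n) + 1"
proof -
  have nn: "0 \<le> \<lfloor>d * 2 ^ n\<rfloor>" using d_nonneg by simp
  have r: "real (fl n) = of_int \<lfloor>d * 2 ^ n\<rfloor>" unfolding fl_def using nn by simp
  show "real (fl n) \<le> d * 2 ^ n" unfolding r by simp
  show "d * 2 ^ n < real (fl n) + 1" unfolding r by linarith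
qed

lemma fl_bounds': "real (fl n) * (1/2) ^ n \<le> d" "d < (real (fl n) + 1) * (1/2) ^ n"
proof -
  have p: "(0::real) < 2 ^ n" by simp
  show "real (fl n) * (1/2) ^ n \<le> d" using fl_bounds(1)[of n] p
    by (simp add: power_one_over field_simps)
  show "d < (real (fl n) + 1) * (1/2) ^ n" using fl_bounds(2)[of n] p
    by (simp add: power_one_over field_simps)
qed

lemma ev_Dst: "eventually (\<lambda>s. Dst p s \<noteq> 0) sequentially"
  using Dst_conv[of 1] unfolding eventually_sequentially by auto

lemma ev_flr: "eventually (\<lambda>s. flr p s n = fl n) sequentially"
proof -
  let ?e = "(real (fl n) + 1) / 2 ^ n - d"
  have e: "0 < ?e" using fl_bounds(2)[of n] by (simp add: field_simps)
  obtain s0 where s0: "\<And>s. s \<ge> s0 \<Longrightarrow> Dst p s \<noteq> 0 \<and> rv (Dst p s - 1) < d + ?e"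
    using Dst_conv[OF e] by blast
  have "flr p s n = fl n" if s: "s \<ge> s0" for s
  proof -
    let ?D = "rv (Dst p s - 1)"
    have nz: "Dst p s \<noteq> 0" and lt: "?D < d + ?e" using s0[OF s] by auto
    have gt: "d < ?D" by (rule Dst_gt[OF nz])
    have p2: "(0::real) < 2 ^ n" by simp
    have up: "?D * 2 ^ n < real (fl n) + 1" using lt p2 by (simp add: field_simps)
    have lowr: "d * 2 ^ n < ?D * 2 ^ n" using gt p2 by simp
    have lo2: "real (fl n) \<le> ?D * 2 ^ n" using fl_bounds(1)[of n] lowr by linarith
    have "\<lfloor>?D * 2 ^ n\<rfloor> = int (fl n)"
      unfolding floor_eq_iff using lo2 up by simp
    then show ?thesis unfolding flr_def using nz gt d_nonneg
      by (simp add: rfl_eq)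
  qed
  then show ?thesis unfolding eventually_sequentially by blast
qed

definition hh :: "nat \<Rightarrow> real" where "hh n = (1/2) ^ n"
definition xt :: "nat \<Rightarrow> real" where "xt n = rv (Xf p n)"

definition loI :: "nat \<Rightarrow> nat \<Rightarrow> real" where
  "loI side n = (if side = 0 then xt n - (real (fl n) + 2) * hh n else xt n + real (fl n) * hh n - hh n)"
definition hiI :: "nat \<Rightarrow> nat \<Rightarrow> real" where
  "hiI side n = (if side = 0 then xt n + hh n - real (fl n) * hh n else xt n + (real (fl n) + 2) * hh n)"

lemma rv_dy_hh: "rv (dy k n) = real k * hh n"
  unfolding hh_def by (rule rv_dy')

lemma rv_lo: "flr p s n = fl n \<Longrightarrow> rv (lo p s side n) = loI side n"
  unfolding lo_def loI_def
  by (cases "side = 0") (simp_all del: rv_dy add: rv_dy_hh xt_def algebra_simps)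
lemma rv_hi: "flr p s n = fl n \<Longrightarrow> rv (hi p s side n) = hiI side n"
  unfolding hi_def hiI_def
  by (cases "side = 0") (simp_all del: rv_dy add: rv_dy_hh xt_def algebra_simps)

lemma noenum_sem:
  "noenum p s cc \<noteq> 0 \<longleftrightarrow> (\<forall>m<s. Ef p m = 0 \<or> \<not> (rv (ivA cc) \<le> rv (ivA (Ef p m - 1)) \<and> rv (ivB (Ef p m - 1)) \<le> rv (ivB cc)))"
proof (induction s)
  case 0 then show ?case by (simp add: noenum_def)
next
  case (Suc s)
  have "noenum p (Suc s) cc = nestep p cc (noenum p s cc) s" by (simp add: noenum_def)
  then show ?case using Suc by (auto simp: nestep_def rle_iff less_Suc_eq)
qed

definition free :: "nat \<Rightarrow> bool" where
  "free cc \<longleftrightarrow> (\<forall>y\<in>A. \<not> (rv (ivA cc) < y \<and> y < rv (ivB cc)))"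

lemma ev_noenum: "eventually (\<lambda>s. (noenum p s cc \<noteq> 0) = free cc) sequentially"
proof (cases "free cc")
  case True
  have "noenum p s cc \<noteq> 0" for s
    unfolding noenum_sem
  proof (intro allI impI)
    fix m assume "m < s"
    show "Ef p m = 0 \<or> \<not> (rv (ivA cc) \<le> rv (ivA (Ef p m - 1)) \<and> rv (ivB (Ef p m - 1)) \<le> rv (ivB cc))"
    proof (cases "Ef p m")
      case (Suc k)
      obtain y where "y \<in> A" "rv (ivA k) < y" "y < rv (ivB k)" using enum_meets[OF Suc] by blast
      then show ?thesis using True Suc unfolding free_def by force
    qed simp
  qed
  then show ?thesis using True by simp
next
  case False
  then obtain y where y: "y \<in> A" "rv (ivA cc) < y" "y < rv (ivB cc)" unfolding free_def by blast
  obtain m k where mk: "Ef p m = Suc k" "rv (ivA k) = rv (ivA cc)" "rv (ivB k) = rv (ivB cc)"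
    using meets_enum[OF ivA_rat ivB_rat y] by blast
  have "noenum p s cc = 0" if "s \<ge> Suc m" for s
  proof -
    have ms: "m < s" using that by simp
    have "\<not> (Ef p m = 0 \<or> \<not> (rv (ivA cc) \<le> rv (ivA (Ef p m - 1)) \<and> rv (ivB (Ef p m - 1)) \<le> rv (ivB cc)))"
      using mk by simp
    then have "\<not> (\<forall>m<s. Ef p m = 0 \<or> \<not> (rv (ivA cc) \<le> rv (ivA (Ef p m - 1)) \<and> rv (ivB (Ef p m - 1)) \<le> rv (ivB cc)))"
      using ms by blast
    then show ?thesis unfolding noenum_sem[symmetric] by simp
  qed
  then show ?thesis using False unfolding eventually_sequentially
    by (intro exI[of _ "Suc m"]) simp
qed

definition CertI :: "nat \<Rightarrow> nat \<Rightarrow> bool" where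
  "CertI side k \<longleftrightarrow> rv (ivA (pd1 k)) < loI side (pd2 k) \<and> hiI side (pd2 k) < rv (ivB (pd1 k)) \<and> free (pd1 k)"

lemma ev_cert: "eventually (\<lambda>s. cert p s side k = CertI side k) sequentially"
proof -
  have "eventually (\<lambda>s. Dst p s \<noteq> 0 \<and> flr p s (pd2 k) = fl (pd2 k) \<and> (noenum p s (pd1 k) \<noteq> 0) = free (pd1 k)) sequentially"
    using ev_Dst ev_flr ev_noenum by (intro eventually_conj)
  then show ?thesis
    by (rule eventually_mono) (simp add: cert_def CertI_def rlt_iff rv_lo rv_hi)
qed

lemma nocert_sem: "nocert f s side k \<noteq> 0 \<longleftrightarrow> (\<forall>k'<k. \<not> cert f s side k')"
proof (induction k)
  case 0 then show ?case by (simp add: nocert_def)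
next
  case (Suc k)
  have "nocert f s side (Suc k) = (if 0 < nocert f s side k \<and> \<not> cert f s side k then 1 else 0)"
    by (simp add: nocert_def)
  then show ?case using Suc by (auto simp: less_Suc_eq)
qed

lemma nocert_sem': "0 < nocert f s side k \<longleftrightarrow> (\<forall>k'<k. \<not> cert f s side k')"
  using nocert_sem[of f s side k] by simp

definition InstI :: "nat \<Rightarrow> nat \<Rightarrow> bool" where
  "InstI side k \<longleftrightarrow> CertI side k \<and> (\<forall>k'<k. \<not> CertI side k')"

lemma ev_inst: "eventually (\<lambda>s. inst p s side k = of_bool (InstI side k)) sequentially"
proof -
  have "eventually (\<lambda>s. \<forall>k'\<in>{..k}. cert p s side k' = CertI side k') sequentially"
    by (rule eventually_ball_finite) (auto intro: ev_cert)
  then show ?thesis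
    by (rule eventually_mono) (auto simp: inst_def InstI_def nocert_sem')
qed

definition nameI :: "nat \<Rightarrow> nat \<Rightarrow> nat" where
  "nameI side m = tocode (if side = 0 then rsub (Xf p (Suc m)) (dy (fl (Suc m)) (Suc m))
                             else radd (Xf p (Suc m)) (dy (fl (Suc m)) (Suc m)))"

lemma ev_name: "eventually (\<lambda>s. name p s side m = nameI side m) sequentially"
  using ev_flr[of "Suc m"] by (rule eventually_mono) (simp add: name_def nameI_def)

definition wstar :: "nat \<Rightarrow> nat" where
  "wstar j = (if pd1 j = 0 then of_bool (InstI 0 (pd2 j)) else if pd1 j = 1 then of_bool (InstI 1 (pd2 j))
       else if pd1 j = 2 then nameI 0 (pd2 j) else if pd1 j = 3 then nameI 1 (pd2 j) else 0)"

lemma ev_stage: "eventually (\<lambda>s. stage p s j = wstar j) sequentially"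
proof -
  have "eventually (\<lambda>s. inst p s 0 (pd2 j) = of_bool (InstI 0 (pd2 j)) \<and> inst p s 1 (pd2 j) = of_bool (InstI 1 (pd2 j))
      \<and> name p s 0 (pd2 j) = nameI 0 (pd2 j) \<and> name p s 1 (pd2 j) = nameI 1 (pd2 j)) sequentially"
    by (intro eventually_conj ev_inst ev_name)
  then show ?thesis
    by (rule eventually_mono) (simp add: stage_def wstar_def)
qed

lemma lim_stage: "baire_lim (\<lambda>i j. stage p i j) = {wstar}"
proof
  show "{wstar} \<subseteq> baire_lim (\<lambda>i j. stage p i j)"
  proof (clarsimp simp: baire_lim_def)
    fix k
    have "eventually (\<lambda>i. \<forall>n\<in>{..<k}. stage p i n = wstar n) sequentially"
      by (rule eventually_ball_finite) (auto intro: ev_stage)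
    then show "\<exists>N. \<forall>i\<ge>N. \<forall>n<k. stage p i n = wstar n"
      unfolding eventually_sequentially by auto
  qed
  show "baire_lim (\<lambda>i j. stage p i j) \<subseteq> {wstar}"
  proof (clarsimp simp: baire_lim_def)
    fix q assume q: "\<forall>k. \<exists>N. \<forall>i\<ge>N. \<forall>n<k. stage p i n = q n"
    show "q = wstar"
    proof
      fix n
      obtain N1 where N1: "\<And>i. i \<ge> N1 \<Longrightarrow> stage p i n = q n" using q[rule_format, of "Suc n"] by blast
      obtain N2 where N2: "\<And>i. i \<ge> N2 \<Longrightarrow> stage p i n = wstar n"
        using ev_stage[of n] unfolding eventually_sequentially by blast
      show "q n = wstar n" using N1[of "max N1 N2"] N2[of "max N1 N2"] by simp
    qed
  qed
qed

end

context setting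
begin

definition cs :: "nat \<Rightarrow> real" where "cs side = (if side = 0 then x - d else x + d)"

lemma base_facts:
  "xt n \<le> x + hh n" "x - hh n \<le> xt n" "real (fl n) * hh n \<le> d" "d < real (fl n) * hh n + hh n"
  using Xf_close[of n] fl_bounds'[of n] unfolding xt_def hh_def by (auto simp: algebra_simps)

lemma bracket:
  "loI side n \<le> cs side \<and> cs side \<le> hiI side n \<and> cs side - 3 * hh n \<le> loI side n \<and> hiI side n \<le> cs side + 3 * hh n"
proof (cases "side = 0")
  case True
  have l: "loI side n = xt n - real (fl n) * hh n - 2 * hh n" "hiI side n = xt n + hh n - real (fl n) * hh n"
      "cs side = x - d"
    using True by (simp_all add: loI_def hiI_def cs_def ring_distribs)
  show ?thesis unfolding l using base_facts[of n] by linarith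
next
  case False
  have l: "loI side n = xt n + real (fl n) * hh n - hh n" "hiI side n = xt n + real (fl n) * hh n + 2 * hh n"
      "cs side = x + d"
    using False by (simp_all add: loI_def hiI_def cs_def ring_distribs)
  show ?thesis unfolding l using base_facts[of n] by linarith
qed

lemma CertI_sound: "CertI side k \<Longrightarrow> cs side \<notin> A"
  using bracket[of side "pd2 k"] unfolding CertI_def free_def by force

lemma CertI_complete:
  assumes "cs side \<notin> A"
  shows "\<exists>k. CertI side k"
proof -
  let ?c = "cs side"
  have "open (- A)" using Acl by (simp add: open_Compl)
  then obtain e where e: "0 < e" "\<And>y. dist y ?c < e \<Longrightarrow> y \<in> - A"
    using assms unfolding open_dist by blast
  obtain a where a: "a \<in> \<rat>" "?c - e < a" "a < ?c - e/2" using Rats_dense_in_real[of "?c - e" "?c - e/2"] e by auto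
  obtain b where b: "b \<in> \<rat>" "?c + e/2 < b" "b < ?c + e" using Rats_dense_in_real[of "?c + e/2" "?c + e"] e by auto
  obtain n where n: "(1/2::real) ^ n < e / 6" using half_pow_lt[of "e/6"] e by auto
  obtain cc where cc: "rv (ivA cc) = a" "rv (ivB cc) = b" using ivl_code[OF a(1) b(1)] by blast
  have br: "?c - 3 * hh n \<le> loI side n" "hiI side n \<le> ?c + 3 * hh n" using bracket[of side n] by auto
  have hn: "hh n < e / 6" using n by (simp add: hh_def)
  have fr: "free cc"
    unfolding free_def
  proof
    fix y assume "y \<in> A"
    then have nd: "\<not> dist y ?c < e" using e(2) by blast
    show "\<not> (rv (ivA cc) < y \<and> y < rv (ivB cc))"
    proof
      assume "rv (ivA cc) < y \<and> y < rv (ivB cc)"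
      then have "-e < y - ?c" "y - ?c < e" using cc a b by linarith+
      then have "dist y ?c < e" by (simp add: dist_real_def abs_less_iff)
      then show False using nd by blast
    qed
  qed
  have "CertI side (prod_encode (cc, n))"
    unfolding CertI_def using cc a b br hn fr by simp
  then show ?thesis by blast
qed

lemma one_in: "cs 0 \<in> A \<or> cs 1 \<in> A"
proof -
  obtain y where y: "y \<in> A" "\<bar>x - y\<bar> = d" using nearest by blast
  then have "y = x - d \<or> y = x + d" by (auto simp: abs_if split: if_splits)
  then show ?thesis using y by (auto simp: cs_def)
qed

lemma InstI_cross: "InstI 0 k \<Longrightarrow> InstI 1 k' \<Longrightarrow> False"
  using one_in CertI_sound unfolding InstI_def by blast

lemma InstI_same: "InstI s k \<Longrightarrow> InstI s k' \<Longrightarrow> k = k'"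
  unfolding InstI_def by (metis linorder_neqE_nat)

lemma InstI_none:
  assumes "\<And>k. \<not> InstI side k"
  shows "cs side \<in> A"
proof (rule ccontr)
  assume "cs side \<notin> A"
  then obtain k where k: "CertI side k" using CertI_complete by blast
  let ?k0 = "LEAST k. CertI side k"
  have "InstI side ?k0" unfolding InstI_def
    using LeastI[of "CertI side", OF k] not_less_Least[of _ "CertI side"] by blast
  then show False using assms by blast
qed

lemma nameI_close: "\<bar>real_of_code (nameI side m) - cs side\<bar> \<le> (1/2) ^ m"
proof -
  have h: "hh (Suc m) = (1/2) ^ m / 2" by (simp add: hh_def)
  have r: "real_of_code (nameI side m) = (if side = 0 then xt (Suc m) - real (fl (Suc m)) * hh (Suc m)
            else xt (Suc m) + real (fl (Suc m)) * hh (Suc m))"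
    by (simp add: nameI_def xt_def rv_dy_hh del: rv_dy)
  have b: "xt (Suc m) \<le> x + (1/2) ^ m / 2" "x - (1/2) ^ m / 2 \<le> xt (Suc m)"
    "real (fl (Suc m)) * hh (Suc m) \<le> d" "d < real (fl (Suc m)) * hh (Suc m) + (1/2) ^ m / 2"
    using base_facts[of "Suc m"] unfolding h by simp_all
  show ?thesis
  proof (cases "side = 0")
    case True
    then have e: "real_of_code (nameI side m) - cs side = (xt (Suc m) - x) + (d - real (fl (Suc m)) * hh (Suc m))"
      unfolding r by (simp add: cs_def)
    show ?thesis unfolding e using b by (simp add: abs_le_iff)
  next
    case False
    then have e: "real_of_code (nameI side m) - cs side = (xt (Suc m) - x) - (d - real (fl (Suc m)) * hh (Suc m))"
      unfolding r by (simp add: cs_def)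
    show ?thesis unfolding e using b by (simp add: abs_le_iff)
  qed
qed

end

lemma cauchy_rep_intro:
  assumes "\<And>n. \<bar>real_of_code (q n) - y\<bar> \<le> (1/2) ^ n"
  shows "cauchy_rep q = Some y"
proof -
  have uniq: "z = y" if z: "\<forall>n. \<bar>real_of_code (q n) - z\<bar> \<le> (1/2) ^ n" for z
  proof (rule ccontr)
    assume "z \<noteq> y"
    then have "0 < \<bar>z - y\<bar> / 2" by simp
    then obtain n where n: "(1/2::real) ^ n < \<bar>z - y\<bar> / 2" using half_pow_lt by blast
    have "\<bar>z - y\<bar> \<le> \<bar>real_of_code (q n) - z\<bar> + \<bar>real_of_code (q n) - y\<bar>" by linarith
    also have "\<dots> \<le> 2 * (1/2) ^ n" using z[rule_format, of n] assms[of n] by linarith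
    finally show False using n by simp
  qed
  have "(THE z. \<forall>n. \<bar>real_of_code (q n) - z\<bar> \<le> (1/2) ^ n) = y"
    by (rule the_equality) (use assms uniq in auto)
  then show ?thesis unfolding cauchy_rep_def using assms by auto
qed

lemma cauchy_rep_elim:
  assumes "cauchy_rep q = Some y"
  shows "\<bar>real_of_code (q n) - y\<bar> \<le> (1/2) ^ n"
proof -
  obtain z where z: "\<forall>n. \<bar>real_of_code (q n) - z\<bar> \<le> (1/2) ^ n"
    using assms unfolding cauchy_rep_def by (auto split: if_splits)
  have "cauchy_rep q = Some z" by (rule cauchy_rep_intro) (use z in auto)
  then show ?thesis using assms z by simp
qed

lemma names_unique:
  assumes "closed A" "closed B" "names_closed_pos e A" "names_closed_pos e B"
  shows "A \<subseteq> B"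
proof
  fix y assume yA: "y \<in> A"
  show "y \<in> B"
  proof (rule ccontr)
    assume "y \<notin> B"
    have "open (- B)" using assms(2) by (simp add: open_Compl)
    then obtain r where r: "0 < r" "\<And>z. dist z y < r \<Longrightarrow> z \<in> - B"
      using \<open>y \<notin> B\<close> unfolding open_dist by blast
    obtain a where a: "a \<in> \<rat>" "y - r < a" "a < y" using Rats_dense_in_real[of "y - r" y] r by auto
    obtain b where b: "b \<in> \<rat>" "y < b" "b < y + r" using Rats_dense_in_real[of y "y + r"] r by auto
    have "(a, b) \<in> {(a, b). a \<in> \<rat> \<and> b \<in> \<rat> \<and> a < b \<and> (\<exists>y\<in>A. a < y \<and> y < b)}"
      using a b yA by auto
    then have "(a, b) \<in> {(a, b). a \<in> \<rat> \<and> b \<in> \<rat> \<and> a < b \<and> (\<exists>y\<in>B. a < y \<and> y < b)}"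
      using assms(3,4) unfolding names_closed_pos_def by simp
    then obtain z where "z \<in> B" "a < z" "z < b" by auto
    then have "dist z y < r" using a b by (auto simp: dist_real_def)
    then show False using r(2) \<open>z \<in> B\<close> by blast
  qed
qed

lemma closed_pos_rep_elim:
  assumes "closed_pos_rep e = Some A"
  shows "closed A \<and> names_closed_pos e A"
proof -
  obtain B where B: "closed B" "names_closed_pos e B"
    using assms unfolding closed_pos_rep_def by (auto split: if_splits)
  have "(THE A. closed A \<and> names_closed_pos e A) = B"
    by (rule the_equality) (use B names_unique in blast)+
  moreover have ex: "\<exists>A. closed A \<and> names_closed_pos e A" using B by blast
  ultimately have "closed_pos_rep e = Some B" unfolding closed_pos_rep_def by simp
  then show ?thesis using assms B by simp
qed

section \<open>The reductions\<close>

definition idK :: "nat \<Rightarrow> nat" where "idK = assoc Suc (\<lambda>n c. lnth c n)"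
definition oddH :: "nat \<Rightarrow> nat" where "oddH = assoc (\<lambda>n. 2 * n + 2) (\<lambda>n c. lnth c (2 * n + 1))"
definition g0K :: "nat \<Rightarrow> nat" where
  "g0K = assoc (\<lambda>n. Suc (penc (n mod 2) (n div 2))) (\<lambda>n c. lnth c (penc (n mod 2) (n div 2)))"
definition g0H :: "nat \<Rightarrow> nat" where
  "g0H = assoc (\<lambda>n. 2 * penc 3 n + 2) (\<lambda>n c. if lnth c 1 = 0 then lnth c (2 * penc 2 n) else lnth c (2 * penc 3 n))"

lemma computable_idK: "computable_nat idK"
  unfolding idK_def
  by (rule rec_assoc; rule rec1I[where e="Sc (V 0)"] rec2I[where e="A2 lnth (V 1) (V 0)"]) (simp_all add: rec2_lnth)

lemma computable_oddH: "computable_nat oddH"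
  unfolding oddH_def
  by (rule rec_assoc; rule rec1I[where e="A2 (+) (A2 (*) (K 2) (V 0)) (K 2)"]
        rec2I[where e="A2 lnth (V 1) (Sc (A2 (*) (K 2) (V 0)))"]) (simp_all add: rec2_lnth rec_basic)

lemma computable_g0K: "computable_nat g0K"
  unfolding g0K_def
  by (rule rec_assoc; rule rec1I[where e="Sc (A2 penc (A1 (\<lambda>x. x mod 2) (V 0)) (A1 (\<lambda>x. x div 2) (V 0)))"]
        rec2I[where e="A2 lnth (V 1) (A2 penc (A1 (\<lambda>x. x mod 2) (V 0)) (A1 (\<lambda>x. x div 2) (V 0)))"])
     (simp_all add: rec2_lnth rec2_penc rec1_mod2 rec1_div2)

lemma computable_g0H: "computable_nat g0H"
  unfolding g0H_def
  by (rule rec_assoc; rule rec1I[where e="A2 (+) (A2 (*) (K 2) (A2 penc (K 3) (V 0))) (K 2)"]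
        rec2I[where e="A3 cond (A2 neq (A2 lnth (V 1) (K 1)) (K 0))
             (A2 lnth (V 1) (A2 (*) (K 2) (A2 penc (K 2) (V 0))))
             (A2 lnth (V 1) (A2 (*) (K 2) (A2 penc (K 3) (V 0))))"])
     (simp_all add: rec2_lnth rec2_penc rec_basic ndefs)

lemma tt_idK: "tt_apply idK p = Some p"
  unfolding idK_def tt_apply_assoc by (simp add: lnth_map del: upt_Suc)

lemma tt_oddH: "tt_apply oddH r = Some (\<lambda>n. r (2 * n + 1))"
  unfolding oddH_def tt_apply_assoc by (simp add: lnth_map del: upt_Suc)

lemma bpair_odd [simp]: "bpair p q (2 * n + 1) = q n" and bpair_even [simp]: "bpair p q (2 * n) = p n"
  and bpair_odd' [simp]: "bpair p q (Suc (2 * n)) = q n" and bpair_1: "bpair p q 1 = q 0"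
  by (simp_all add: bpair_def)

lemma tt_g0K: "tt_apply g0K w = Some (\<lambda>n. w (penc (n mod 2) (n div 2)))"
  unfolding g0K_def tt_apply_assoc by (simp add: lnth_map del: upt_Suc)

lemma penc23: "penc 2 n < penc 3 n"
proof -
  have e: "3 + n = Suc (2 + n)" by simp
  have "triangle (3 + n) = triangle (2 + n) + Suc (2 + n)" unfolding e by (rule triangle_Suc)
  then show ?thesis by (simp add: penc_def prod_encode_def)
qed

lemma tt_g0H: "tt_apply g0H r = Some (\<lambda>n. if r 1 = 0 then r (2 * penc 2 n) else r (2 * penc 3 n))"
proof -
  have "(\<lambda>n. if lnth (list_encode (map r [0..<2 * penc 3 n + 2])) 1 = 0
             then lnth (list_encode (map r [0..<2 * penc 3 n + 2])) (2 * penc 2 n)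
             else lnth (list_encode (map r [0..<2 * penc 3 n + 2])) (2 * penc 3 n)) =
        (\<lambda>n. if r 1 = 0 then r (2 * penc 2 n) else r (2 * penc 3 n))"
  proof
    fix n
    have a: "2 * penc 2 n < 2 * penc 3 n + 2" using penc23[of n] by simp
    have l1: "lnth (list_encode (map r [0..<2 * penc 3 n + 2])) 1 = r 1" by (rule lnth_map) simp
    have l2: "lnth (list_encode (map r [0..<2 * penc 3 n + 2])) (2 * penc 2 n) = r (2 * penc 2 n)"
      by (rule lnth_map) (rule a)
    have l3: "lnth (list_encode (map r [0..<2 * penc 3 n + 2])) (2 * penc 3 n) = r (2 * penc 3 n)"
      by (rule lnth_map) simp
    show "(if lnth (list_encode (map r [0..<2 * penc 3 n + 2])) 1 = 0
             then lnth (list_encode (map r [0..<2 * penc 3 n + 2])) (2 * penc 2 n)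
             else lnth (list_encode (map r [0..<2 * penc 3 n + 2])) (2 * penc 3 n)) =
          (if r 1 = 0 then r (2 * penc 2 n) else r (2 * penc 3 n))"
      by (simp only: l1 l2 l3)
  qed
  then show ?thesis unfolding g0H_def tt_apply_assoc by simp
qed

definition g0 :: "baire \<Rightarrow> baire set" where
  "g0 w = {r. \<exists>i\<in>llpo (\<lambda>n. w (penc 0 n), \<lambda>n. w (penc 1 n)).
               r = (\<lambda>n. if i = 0 then w (penc 2 n) else w (penc 3 n))}"

definition h0 :: "baire \<Rightarrow> baire set" where
  "h0 p = baire_lim (\<lambda>i j. stage p i j)"

lemma red_llpo: "weihrauch_le Some Some g0 (rep_prod Some Some) nat_rep llpo"
  unfolding weihrauch_le_def
proof (rule exI[of _ g0K], rule exI[of _ g0H], intro conjI allI impI)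
  show "computable_nat g0K" by (rule computable_g0K)
  show "computable_nat g0H" by (rule computable_g0H)
  fix G w w' assume G: "realizes (rep_prod Some Some) nat_rep llpo G"
    and ww: "Some w = Some w'" and ne: "g0 w' \<noteq> {}"
  then have w': "w' = w" by simp
  let ?q = "\<lambda>n. w (penc (n mod 2) (n div 2))"
  have rp: "rep_prod Some Some ?q = Some ((\<lambda>n. w (penc 0 n)), (\<lambda>n. w (penc 1 n)))"
    by (simp add: rep_prod_def)
  have ll: "llpo (\<lambda>n. w (penc 0 n), \<lambda>n. w (penc 1 n)) \<noteq> {}" using ne w' by (auto simp: g0_def)
  obtain y where y: "nat_rep (G ?q) = Some y" "y \<in> llpo (\<lambda>n. w (penc 0 n), \<lambda>n. w (penc 1 n))"
    using G rp ll unfolding realizes_def by blast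
  have y0: "G ?q 0 = y" using y(1) by (simp add: nat_rep_def)
  let ?r = "\<lambda>n. if G ?q 0 = 0 then w (penc 2 n) else w (penc 3 n)"
  have "tt_apply g0H (bpair w (G ?q)) = Some ?r"
    unfolding tt_g0H by (simp only: bpair_1 bpair_even)
  moreover have "?r \<in> g0 w'" unfolding g0_def w' using y y0 by auto
  ultimately show "\<exists>q r. tt_apply g0K w = Some q \<and> tt_apply g0H (bpair w (G q)) = Some r \<and>
      (\<exists>y. Some r = Some y \<and> y \<in> g0 w')"
    unfolding tt_g0K by blast
qed

lemma red_lim: "weihrauch_le Some Some h0 seq_rep Some baire_lim"
  unfolding weihrauch_le_def
proof (rule exI[of _ mainK], rule exI[of _ oddH], intro conjI allI impI)
  show "computable_nat mainK" by (rule computable_mainK)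
  show "computable_nat oddH" by (rule computable_oddH)
  fix G p p' assume G: "realizes seq_rep Some baire_lim G"
    and pp: "Some p = Some p'" and ne: "h0 p' \<noteq> {}"
  then have p': "p' = p" by simp
  let ?q = "\<lambda>n. stage p (pd1 n) (pd2 n)"
  have sr: "seq_rep ?q = Some (\<lambda>i j. stage p i j)" by (simp add: seq_rep_def)
  have "baire_lim (\<lambda>i j. stage p i j) \<noteq> {}" using ne p' by (simp add: h0_def)
  then obtain y where "Some (G ?q) = Some y" "y \<in> baire_lim (\<lambda>i j. stage p i j)"
    using G sr unfolding realizes_def by blast
  then have "G ?q \<in> h0 p'" using p' by (simp add: h0_def)
  moreover have "tt_apply oddH (bpair p (G ?q)) = Some (G ?q)" unfolding tt_oddH by simp
  ultimately show "\<exists>q r. tt_apply mainK p = Some q \<and> tt_apply oddH (bpair p (G q)) = Some r \<and>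
      (\<exists>y. Some r = Some y \<and> y \<in> h0 p')"
    unfolding tt_mainK by blast
qed

lemma (in setting) h0_eq: "h0 p = {wstar}"
  unfolding h0_def by (rule lim_stage)

lemma (in setting) wstar_simps:
  "wstar (penc 0 n) = of_bool (InstI 0 n)" "wstar (penc 1 n) = of_bool (InstI 1 n)"
  "wstar (penc 2 n) = nameI 0 n" "wstar (penc 3 n) = nameI 1 n"
  by (simp_all add: wstar_def)

lemma (in setting) g0_wstar: "g0 wstar = {r. \<exists>i\<in>llpo (\<lambda>n. of_bool (InstI 0 n), \<lambda>n. of_bool (InstI 1 n)).
               r = (\<lambda>n. if i = 0 then nameI 0 n else nameI 1 n)}"
  unfolding g0_def wstar_simps ..

lemma (in setting) llpo_inst:
  "llpo (\<lambda>n. of_bool (InstI 0 n), \<lambda>n. of_bool (InstI 1 n)) = {i. i < 2 \<and> (\<forall>k. \<not> InstI i k)}"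
proof -
  have dom: "\<forall>j m j' m'. j < 2 \<and> j' < 2 \<and> ([\<lambda>n. of_bool (InstI 0 n), \<lambda>n. of_bool (InstI 1 n)] ! j) m \<noteq> (0::nat)
       \<and> ([\<lambda>n. of_bool (InstI 0 n), \<lambda>n. of_bool (InstI 1 n)] ! j') m' \<noteq> 0 \<longrightarrow> j = j' \<and> m = m'"
  proof (intro allI impI)
    fix j m j' m'
    assume a: "j < 2 \<and> j' < 2 \<and> ([\<lambda>n. of_bool (InstI 0 n), \<lambda>n. of_bool (InstI 1 n)] ! j) m \<noteq> (0::nat)
       \<and> ([\<lambda>n. of_bool (InstI 0 n), \<lambda>n. of_bool (InstI 1 n)] ! j') m' \<noteq> 0"
    then have j: "j = 0 \<or> j = 1" "j' = 0 \<or> j' = 1" by auto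
    have ij: "InstI j m" "InstI j' m'" using a j by (auto simp: nth_Cons')
    show "j = j' \<and> m = m'" using j ij InstI_cross InstI_same by metis
  qed
  have "{i. i < 2 \<and> [\<lambda>n. of_bool (InstI 0 n), \<lambda>n. of_bool (InstI 1 n)] ! i = (\<lambda>_. 0::nat)} = {i. i < 2 \<and> (\<forall>k. \<not> InstI i k)}"
  proof (intro Collect_cong iffI conjI)
    fix i
    show "i < 2 \<and> [\<lambda>n. of_bool (InstI 0 n), \<lambda>n. of_bool (InstI 1 n)] ! i = (\<lambda>_. 0::nat) \<Longrightarrow> i < 2" by simp
    show "i < 2 \<and> [\<lambda>n. of_bool (InstI 0 n), \<lambda>n. of_bool (InstI 1 n)] ! i = (\<lambda>_. 0::nat) \<Longrightarrow> \<forall>k. \<not> InstI i k"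
      by (cases i) (auto simp: fun_eq_iff nth_Cons' split: if_splits)
    show "i < 2 \<and> (\<forall>k. \<not> InstI i k) \<Longrightarrow> i < 2" by simp
    show "i < 2 \<and> (\<forall>k. \<not> InstI i k) \<Longrightarrow> [\<lambda>n. of_bool (InstI 0 n), \<lambda>n. of_bool (InstI 1 n)] ! i = (\<lambda>_. 0::nat)"
      by (cases i) (auto simp: fun_eq_iff nth_Cons' less_Suc_eq)
  qed
  moreover have "llpo (\<lambda>n. of_bool (InstI 0 n), \<lambda>n. of_bool (InstI 1 n)) =
     {i. i < 2 \<and> [\<lambda>n. of_bool (InstI 0 n), \<lambda>n. of_bool (InstI 1 n)] ! i = (\<lambda>_. 0::nat)}"
    unfolding llpo_def prod.case using dom by (rule if_P)
  ultimately show ?thesis by simp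
qed

lemma (in setting) llpo_nonempty: "llpo (\<lambda>n. of_bool (InstI 0 n), \<lambda>n. of_bool (InstI 1 n)) \<noteq> {}"
proof -
  have "(\<forall>k. \<not> InstI 0 k) \<or> (\<forall>k. \<not> InstI 1 k)" using InstI_cross by blast
  then have "0 \<in> {i. i < 2 \<and> (\<forall>k. \<not> InstI i k)} \<or> 1 \<in> {i. i < (2::nat) \<and> (\<forall>k. \<not> InstI i k)}" by auto
  then show ?thesis unfolding llpo_inst by blast
qed

lemma (in setting) answer:
  assumes "r \<in> g0 wstar"
  shows "\<exists>y. cauchy_rep r = Some y \<and> y \<in> proj_plus (x, A)"
proof -
  obtain i where i: "i < 2" "\<forall>k. \<not> InstI i k" and r: "r = (\<lambda>n. if i = 0 then nameI 0 n else nameI 1 n)"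
    using assms unfolding g0_wstar llpo_inst by blast
  have ci: "cs i \<in> A" using InstI_none i(2) by blast
  have r': "r = (\<lambda>n. nameI i n)" using r i(1) by (auto simp: less_2_cases_iff)
  have "cauchy_rep r = Some (cs i)" unfolding r' by (rule cauchy_rep_intro) (rule nameI_close)
  moreover have "cs i \<in> proj_plus (x, A)"
    using ci Acl Ane d_nonneg unfolding proj_plus_def cs_def by (auto simp: d_def)
  ultimately show ?thesis by blast
qed

lemma red_main:
  "weihrauch_le (rep_prod cauchy_rep closed_pos_rep) cauchy_rep proj_plus Some Some (mv_comp g0 h0)"
  unfolding weihrauch_le_def
proof (rule exI[of _ idK], rule exI[of _ oddH], intro conjI allI impI)
  show "computable_nat idK" by (rule computable_idK)
  show "computable_nat oddH" by (rule computable_oddH)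
  fix G p xA assume G: "realizes Some Some (mv_comp g0 h0) G"
    and rp: "rep_prod cauchy_rep closed_pos_rep p = Some xA" and ne: "proj_plus xA \<noteq> {}"
  obtain x A where xA: "xA = (x, A)" by (cases xA)
  have cx: "cauchy_rep (\<lambda>n. p (2 * n)) = Some x" and cA: "closed_pos_rep (\<lambda>n. p (2 * n + 1)) = Some A"
    using rp unfolding xA rep_prod_def by (auto split: option.splits)
  have clA: "closed A" and nA: "names_closed_pos (\<lambda>m. p (2 * m + 1)) A"
    using closed_pos_rep_elim[OF cA] by auto
  have Ane: "A \<noteq> {}" using ne unfolding xA proj_plus_def by (auto split: if_splits)
  interpret S: setting p x A
    by unfold_locales (use cauchy_rep_elim[OF cx] clA nA Ane in auto)
  have mv: "mv_comp g0 h0 p = g0 S.wstar"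
    unfolding mv_comp_def S.h0_eq using S.llpo_nonempty by (auto simp: S.g0_wstar)
  have "mv_comp g0 h0 p \<noteq> {}" unfolding mv S.g0_wstar using S.llpo_nonempty by auto
  then obtain r where r: "Some (G p) = Some r" "r \<in> mv_comp g0 h0 p"
    using G unfolding realizes_def by blast
  then have "G p \<in> g0 S.wstar" using mv by simp
  then obtain y where y: "cauchy_rep (G p) = Some y" "y \<in> proj_plus (x, A)" using S.answer by blast
  have "tt_apply oddH (bpair p (G p)) = Some (G p)" unfolding tt_oddH by simp
  then show "\<exists>q r. tt_apply idK p = Some q \<and> tt_apply oddH (bpair p (G q)) = Some r \<and>
      (\<exists>y. cauchy_rep r = Some y \<and> y \<in> proj_plus xA)"
    unfolding tt_idK xA using y by blast
qed

theorem proposition4p16: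
  shows "weihrauch_le_cprod
           (rep_prod cauchy_rep closed_pos_rep) cauchy_rep proj_plus
           (rep_prod Some Some) nat_rep llpo
           seq_rep Some baire_lim"
  unfolding weihrauch_le_cprod_def
  using red_llpo red_lim red_main by blast


end
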